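(* A multiplicative unitary $V$ of multiplicity 1 on a finite-dimensional Hilbert space has only finitely many pre-subgroups.
   Context: Let $\mathcal H$ be a finite-dimensional Hilbert space and $V\in\mathcal L(\mathcal H\otimes\mathcal H)$ a multiplicative unitary ($V_{12}V_{13}V_{23}=V_{23}V_{12}$ in leg notation) of multiplicity 1, i.e. the space of vectors $\xi$ with $V(\xi\otimes\eta)=\xi\otimes\eta$ for all $\eta$ (fixed vectors) is one-dimensional. Fix a unit fixed vector $e$. A pre-subgroup of $V$ is a vector $f\in\mathcal H$ with $\|f\|=1$, $\langle f,e\rangle>0$ and $V(f\otimes f)=f\otimes f$. *)

theory Defs
  imports Complex_Main
begin

text \<open>A finite-dimensional Hilbert space is modelled as \<open>'n \<Rightarrow> complex\<close> for a finite index
type \<open>'n\<close> (i.e. \<open>\<complex>^n\<close> with the standard inner product); the tensor product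
\<open>H \<otimes> H\<close> as \<open>'n \<times> 'n \<Rightarrow> complex\<close>, and \<open>H \<otimes> H \<otimes> H\<close> as \<open>'n \<times> 'n \<times> 'n \<Rightarrow> complex\<close>.\<close>

type_synonym ('i) vect = "'i \<Rightarrow> complex"
type_synonym ('i) mat = "'i \<Rightarrow> 'i \<Rightarrow> complex"

definition inner_c :: "('i::finite) vect \<Rightarrow> 'i vect \<Rightarrow> complex" where
  "inner_c x y = (\<Sum>i\<in>UNIV. x i * cnj (y i))"

definition vnorm :: "('i::finite) vect \<Rightarrow> real" where
  "vnorm x = sqrt (\<Sum>i\<in>UNIV. (cmod (x i))\<^sup>2)"

definition tensor :: "'n vect \<Rightarrow> 'n vect \<Rightarrow> ('n \<times> 'n) vect" where
  "tensor x y = (\<lambda>(i, j). x i * y j)"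

definition mat_apply :: "('i::finite) mat \<Rightarrow> 'i vect \<Rightarrow> 'i vect" where
  "mat_apply A x = (\<lambda>p. \<Sum>q\<in>UNIV. A p q * x q)"

definition mat_mult :: "('i::finite) mat \<Rightarrow> 'i mat \<Rightarrow> 'i mat" where
  "mat_mult A B = (\<lambda>p r. \<Sum>q\<in>UNIV. A p q * B q r)"

definition mat_id :: "'i mat" where
  "mat_id = (\<lambda>p q. if p = q then 1 else 0)"

definition mat_adj :: "'i mat \<Rightarrow> 'i mat" where
  "mat_adj A = (\<lambda>p q. cnj (A q p))"

definition unitary_mat :: "('i::finite) mat \<Rightarrow> bool" where
  "unitary_mat U \<longleftrightarrow> mat_mult U (mat_adj U) = mat_id \<and> mat_mult (mat_adj U) U = mat_id"

definition leg12 :: "('n \<times> 'n) mat \<Rightarrow> ('n \<times> 'n \<times> 'n) mat" where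
  "leg12 V = (\<lambda>(i, j, k) (i', j', k'). V (i, j) (i', j') * (if k = k' then 1 else 0))"

definition leg13 :: "('n \<times> 'n) mat \<Rightarrow> ('n \<times> 'n \<times> 'n) mat" where
  "leg13 V = (\<lambda>(i, j, k) (i', j', k'). V (i, k) (i', k') * (if j = j' then 1 else 0))"

definition leg23 :: "('n \<times> 'n) mat \<Rightarrow> ('n \<times> 'n \<times> 'n) mat" where
  "leg23 V = (\<lambda>(i, j, k) (i', j', k'). V (j, k) (j', k') * (if i = i' then 1 else 0))"

definition multiplicative_unitary :: "(('n::finite) \<times> 'n) mat \<Rightarrow> bool" where
  "multiplicative_unitary V \<longleftrightarrow> unitary_mat V \<and>
     mat_mult (mat_mult (leg12 V) (leg13 V)) (leg23 V) = mat_mult (leg23 V) (leg12 V)"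

definition fixed_vectors :: "(('n::finite) \<times> 'n) mat \<Rightarrow> 'n vect set" where
  "fixed_vectors V = {\<xi>. \<forall>\<eta>. mat_apply V (tensor \<xi> \<eta>) = tensor \<xi> \<eta>}"

definition multiplicity_one :: "(('n::finite) \<times> 'n) mat \<Rightarrow> bool" where
  "multiplicity_one V \<longleftrightarrow>
     (\<exists>v::'n vect. (\<exists>i. v i \<noteq> 0) \<and> fixed_vectors V = {\<xi>. \<exists>c::complex. \<xi> = (\<lambda>i. c * v i)})"

text \<open>Pre-subgroups relative to the fixed unit fixed vector \<open>e\<close>; \<open>\<langle>f,e\<rangle> > 0\<close> means
real and strictly positive.\<close>
definition pre_subgroups :: "(('n::finite) \<times> 'n) mat \<Rightarrow> 'n vect \<Rightarrow> 'n vect set" where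
  "pre_subgroups V e = {f. vnorm f = 1 \<and> Im (inner_c f e) = 0 \<and> Re (inner_c f e) > 0 \<and>
      mat_apply V (tensor f f) = tensor f f}"

end

theory Submission
  imports Defs "HOL-Analysis.Analysis"
begin

abbreviation ap where "ap \<equiv> mat_apply"

definition dlt :: "'n \<Rightarrow> 'n vect" where "dlt j = (\<lambda>i. if i = j then 1 else 0)"

definition nn :: "('i::finite) vect \<Rightarrow> real" where "nn x = Re (inner_c x x)"

lemma inner_c_cnj: "inner_c y x = cnj (inner_c x y)"
  unfolding inner_c_def by (simp add: mult.commute)

lemma inner_c_self: "inner_c x x = of_real (\<Sum>i\<in>UNIV. (cmod (x i))\<^sup>2)"
  unfolding inner_c_def of_real_sum by (rule sum.cong[OF refl]) (metis complex_norm_square)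

lemma nn_eq: "nn x = (\<Sum>i\<in>UNIV. (cmod (x i))\<^sup>2)"
  unfolding nn_def inner_c_self by simp

lemma inner_c_self_nn: "inner_c x x = of_real (nn x)"
  by (simp add: inner_c_self nn_eq)

lemma nn_ge0: "nn x \<ge> 0"
  unfolding nn_eq by (simp add: sum_nonneg)

lemma nn_zero: "nn x = 0 \<Longrightarrow> x = (\<lambda>i. 0)"
proof
  fix i assume "nn x = 0"
  then have "\<forall>j\<in>UNIV. (cmod (x j))\<^sup>2 = 0" unfolding nn_eq
    by (subst sum_nonneg_eq_0_iff[symmetric]) auto
  then show "x i = 0" by simp
qed

lemma inner_add1: "inner_c (\<lambda>i. x i + y i) z = inner_c x z + inner_c y z"
  unfolding inner_c_def by (simp add: distrib_right sum.distrib)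
lemma inner_diff1: "inner_c (\<lambda>i. x i - y i) z = inner_c x z - inner_c y z"
  unfolding inner_c_def by (simp add: left_diff_distrib sum_subtractf)
lemma inner_scale1: "inner_c (\<lambda>i. c * x i) z = c * inner_c x z"
  unfolding inner_c_def by (simp add: sum_distrib_left mult.assoc)
lemma inner_add2: "inner_c z (\<lambda>i. x i + y i) = inner_c z x + inner_c z y"
  unfolding inner_c_def by (simp add: distrib_left sum.distrib)
lemma inner_diff2: "inner_c z (\<lambda>i. x i - y i) = inner_c z x - inner_c z y"
  unfolding inner_c_def by (simp add: right_diff_distrib sum_subtractf)
lemma inner_scale2: "inner_c z (\<lambda>i. c * x i) = cnj c * inner_c z x"
  unfolding inner_c_def by (simp add: sum_distrib_left algebra_simps)
lemma inner_zero1: "inner_c (\<lambda>i. 0) z = 0" unfolding inner_c_def by simp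
lemma inner_zero2: "inner_c z (\<lambda>i. 0) = 0" unfolding inner_c_def by simp

lemma inner_dlt: "inner_c x (dlt j) = x j"
  unfolding inner_c_def dlt_def by (simp add: if_distrib cong: if_cong)

lemma inner_ext: "(\<And>y. inner_c x y = inner_c x' y) \<Longrightarrow> x = x'"
proof
  fix j assume "\<And>y. inner_c x y = inner_c x' y"
  from this[of "dlt j"] show "x j = x' j" by (simp add: inner_dlt)
qed

lemma nn_diff: "nn (\<lambda>i. x i - y i) = nn x + nn y - 2 * Re (inner_c x y)"
proof -
  have "inner_c (\<lambda>i. x i - y i) (\<lambda>i. x i - y i) = inner_c x x - inner_c x y - (inner_c y x - inner_c y y)"
    by (simp add: inner_diff1 inner_diff2)
  then have "nn (\<lambda>i. x i - y i) = nn x - Re (inner_c x y) - Re (inner_c y x) + nn y"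
    unfolding nn_def by simp
  moreover have "Re (inner_c y x) = Re (inner_c x y)" using inner_c_cnj[of y x] by simp
  ultimately show ?thesis by simp
qed

lemma re_inner_le: "Re (inner_c x y) \<le> (nn x + nn y) / 2"
  using nn_diff[of x y] nn_ge0[of "\<lambda>i. x i - y i"] by simp

lemma eq_of_nn: "nn x = nn y \<Longrightarrow> Re (inner_c x y) = nn x \<Longrightarrow> x = y"
proof -
  assume a: "nn x = nn y" "Re (inner_c x y) = nn x"
  have "nn (\<lambda>i. x i - y i) = 0" using nn_diff[of x y] a by simp
  from nn_zero[OF this] have "\<And>i. x i - y i = 0" by metis
  then show "x = y" by auto
qed

lemma sum_pair: "(\<Sum>p\<in>(UNIV::('a::finite \<times> 'b::finite) set). g p) = (\<Sum>i\<in>UNIV. \<Sum>j\<in>UNIV. g (i, j))"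
  by (subst sum.cartesian_product) simp

lemma inner_pair: "inner_c (X :: ('a::finite \<times> 'b::finite) vect) Y = (\<Sum>i\<in>UNIV. \<Sum>j\<in>UNIV. X (i,j) * cnj (Y (i,j)))"
  unfolding inner_c_def by (simp add: sum_pair)

lemma inner_tensor: "inner_c (tensor a b) (tensor c d) = inner_c a c * inner_c b d"
  unfolding inner_pair tensor_def inner_c_def
  by (simp add: sum_product mult_ac)

lemma nn_tensor: "nn (tensor a b) = nn a * nn b"
  unfolding nn_def inner_tensor
  by (simp add: inner_c_self)

lemma mat_apply_add: "ap A (\<lambda>i. x i + y i) = (\<lambda>p. ap A x p + ap A y p)"
  unfolding mat_apply_def by (simp add: distrib_left sum.distrib)
lemma mat_apply_diff: "ap A (\<lambda>i. x i - y i) = (\<lambda>p. ap A x p - ap A y p)"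
  unfolding mat_apply_def by (simp add: right_diff_distrib sum_subtractf)
lemma mat_apply_scale: "ap A (\<lambda>i. c * x i) = (\<lambda>p. c * ap A x p)"
  unfolding mat_apply_def by (simp add: sum_distrib_left algebra_simps)
lemma mat_apply_zero: "ap A (\<lambda>i. 0) = (\<lambda>p. 0)"
  unfolding mat_apply_def by simp

lemma mat_apply_mult: "ap (mat_mult A B) x = ap A (ap B x)"
proof
  fix p
  have "ap (mat_mult A B) x p = (\<Sum>q\<in>UNIV. \<Sum>r\<in>UNIV. A p r * B r q * x q)"
    unfolding mat_apply_def mat_mult_def by (simp add: sum_distrib_right)
  also have "\<dots> = (\<Sum>r\<in>UNIV. \<Sum>q\<in>UNIV. A p r * B r q * x q)" by (rule sum.swap)
  also have "\<dots> = ap A (ap B x) p"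
    unfolding mat_apply_def by (simp add: sum_distrib_left mult.assoc)
  finally show "ap (mat_mult A B) x p = ap A (ap B x) p" .
qed

lemma mat_apply_id: "ap mat_id x = x"
proof
  fix p
  have "\<And>q. (if p = q then 1 else 0) * x q = (if p = q then x p else 0)" by simp
  then show "ap mat_id x p = x p" unfolding mat_apply_def mat_id_def by simp
qed

lemma inner_adj: "inner_c (ap A x) y = inner_c x (ap (mat_adj A) y)"
proof -
  have "inner_c (ap A x) y = (\<Sum>p\<in>UNIV. \<Sum>q\<in>UNIV. A p q * x q * cnj (y p))"
    unfolding inner_c_def mat_apply_def by (simp add: sum_distrib_right)
  also have "\<dots> = (\<Sum>q\<in>UNIV. \<Sum>p\<in>UNIV. A p q * x q * cnj (y p))" by (rule sum.swap)
  also have "\<dots> = inner_c x (ap (mat_adj A) y)"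
    unfolding inner_c_def mat_apply_def mat_adj_def by (simp add: sum_distrib_left mult_ac)
  finally show ?thesis .
qed

lemma adj_adj: "mat_adj (mat_adj A) = A" unfolding mat_adj_def by simp

lemma unitary_ap1: "unitary_mat V \<Longrightarrow> ap V (ap (mat_adj V) x) = x"
  unfolding unitary_mat_def by (metis mat_apply_mult mat_apply_id)
lemma unitary_ap2: "unitary_mat V \<Longrightarrow> ap (mat_adj V) (ap V x) = x"
  unfolding unitary_mat_def by (metis mat_apply_mult mat_apply_id)
lemma unitary_inner: "unitary_mat V \<Longrightarrow> inner_c (ap V x) (ap V y) = inner_c x y"
  by (simp add: inner_adj unitary_ap2)
lemma unitary_nn: "unitary_mat V \<Longrightarrow> nn (ap V x) = nn x"
  by (simp add: nn_def unitary_inner)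
lemma unitary_adj: "unitary_mat V \<Longrightarrow> unitary_mat (mat_adj V)"
  unfolding unitary_mat_def adj_adj by simp
lemma unitary_inj: "unitary_mat V \<Longrightarrow> ap V x = ap V y \<Longrightarrow> x = y"
  by (metis unitary_ap2)
lemma unitary_fix_adj: "unitary_mat V \<Longrightarrow> ap V x = x \<Longrightarrow> ap (mat_adj V) x = x"
  by (metis unitary_ap2)

definition t3 :: "'n vect \<Rightarrow> 'n vect \<Rightarrow> 'n vect \<Rightarrow> ('n \<times> 'n \<times> 'n) vect" where
  "t3 a b c = (\<lambda>(i, j, k). a i * b j * c k)"
definition t12 :: "('n \<times> 'n) vect \<Rightarrow> 'n vect \<Rightarrow> ('n \<times> 'n \<times> 'n) vect" where
  "t12 X c = (\<lambda>(i, j, k). X (i, j) * c k)"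
definition t23 :: "'n vect \<Rightarrow> ('n \<times> 'n) vect \<Rightarrow> ('n \<times> 'n \<times> 'n) vect" where
  "t23 a Y = (\<lambda>(i, j, k). a i * Y (j, k))"
definition t13 :: "('n \<times> 'n) vect \<Rightarrow> 'n vect \<Rightarrow> ('n \<times> 'n \<times> 'n) vect" where
  "t13 X b = (\<lambda>(i, j, k). X (i, k) * b j)"

lemma sum3: "(\<Sum>p\<in>(UNIV::('a::finite \<times> 'b::finite \<times> 'c::finite) set). g p) = (\<Sum>i\<in>UNIV. \<Sum>j\<in>UNIV. \<Sum>k\<in>UNIV. g (i, j, k))"
  by (simp add: sum_pair)

lemma delta_sum: "(\<Sum>k'\<in>(UNIV::'a::finite set). a k' * (if k = k' then 1 else 0)) = (a k :: complex)"
proof -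
  have "\<And>k'. a k' * (if k = k' then 1 else 0) = (if k = k' then a k else 0)" by simp
  then show ?thesis by (simp add: sum.delta')
qed

lemma leg12_ap: "ap (leg12 V) X (i, j, k) = (\<Sum>i'\<in>UNIV. \<Sum>j'\<in>UNIV. V (i, j) (i', j') * X (i', j', k))"
proof -
  have "ap (leg12 V) X (i, j, k) = (\<Sum>i'\<in>UNIV. \<Sum>j'\<in>UNIV. \<Sum>k'\<in>UNIV. (V (i, j) (i', j') * X (i', j', k')) * (if k = k' then 1 else 0))"
    unfolding mat_apply_def leg12_def sum3 by (simp add: mult_ac)
  also have "\<dots> = (\<Sum>i'\<in>UNIV. \<Sum>j'\<in>UNIV. V (i, j) (i', j') * X (i', j', k))"
    by (simp only: delta_sum)
  finally show ?thesis .
qed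

lemma leg23_ap: "ap (leg23 V) X (i, j, k) = (\<Sum>j'\<in>UNIV. \<Sum>k'\<in>UNIV. V (j, k) (j', k') * X (i, j', k'))"
proof -
  have "ap (leg23 V) X (i, j, k) = (\<Sum>i'\<in>UNIV. (\<Sum>j'\<in>UNIV. \<Sum>k'\<in>UNIV. V (j, k) (j', k') * X (i', j', k')) * (if i = i' then 1 else 0))"
    unfolding mat_apply_def leg23_def sum3 by (simp add: mult_ac sum_distrib_left)
  also have "\<dots> = (\<Sum>j'\<in>UNIV. \<Sum>k'\<in>UNIV. V (j, k) (j', k') * X (i, j', k'))"
    by (simp only: delta_sum)
  finally show ?thesis .
qed

lemma leg13_ap: "ap (leg13 V) X (i, j, k) = (\<Sum>i'\<in>UNIV. \<Sum>k'\<in>UNIV. V (i, k) (i', k') * X (i', j, k'))"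
proof -
  have "ap (leg13 V) X (i, j, k) = (\<Sum>i'\<in>UNIV. \<Sum>j'\<in>UNIV. \<Sum>k'\<in>UNIV. (V (i, k) (i', k') * X (i', j', k')) * (if j = j' then 1 else 0))"
    unfolding mat_apply_def leg13_def sum3 by (simp add: mult_ac)
  also have "\<dots> = (\<Sum>i'\<in>UNIV. \<Sum>j'\<in>UNIV. (\<Sum>k'\<in>UNIV. V (i, k) (i', k') * X (i', j', k')) * (if j = j' then 1 else 0))"
    by (simp add: sum_distrib_right)
  also have "\<dots> = (\<Sum>i'\<in>UNIV. \<Sum>k'\<in>UNIV. V (i, k) (i', k') * X (i', j, k'))"
    by (simp only: delta_sum)
  finally show ?thesis .
qed

lemma pair_sum: "(\<Sum>q\<in>(UNIV::('a::finite \<times> 'b::finite) set). g q) = (\<Sum>i'\<in>UNIV. \<Sum>j'\<in>UNIV. g (i', j'))"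
  by (rule sum_pair)

lemma leg12_t12: "ap (leg12 V) (t12 X c) = t12 (ap V X) c"
proof
  fix p :: "'a \<times> 'a \<times> 'a"
  obtain i j k where p: "p = (i, j, k)" by (cases p) auto
  show "ap (leg12 V) (t12 X c) p = t12 (ap V X) c p"
    unfolding p leg12_ap unfolding t12_def mat_apply_def pair_sum by (simp add: sum_distrib_right mult.assoc)
qed

lemma leg23_t23: "ap (leg23 V) (t23 a Y) = t23 a (ap V Y)"
proof
  fix p :: "'a \<times> 'a \<times> 'a"
  obtain i j k where p: "p = (i, j, k)" by (cases p) auto
  show "ap (leg23 V) (t23 a Y) p = t23 a (ap V Y) p"
    unfolding p leg23_ap unfolding t23_def mat_apply_def pair_sum by (simp add: sum_distrib_left mult_ac)
qed

lemma leg13_t13: "ap (leg13 V) (t13 X b) = t13 (ap V X) b"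
proof
  fix p :: "'a \<times> 'a \<times> 'a"
  obtain i j k where p: "p = (i, j, k)" by (cases p) auto
  show "ap (leg13 V) (t13 X b) p = t13 (ap V X) b p"
    unfolding p leg13_ap unfolding t13_def mat_apply_def pair_sum by (simp add: sum_distrib_left mult_ac)
qed

lemma adj_leg12: "mat_adj (leg12 V) = leg12 (mat_adj V)"
  unfolding mat_adj_def leg12_def by (auto simp: fun_eq_iff)
lemma adj_leg23: "mat_adj (leg23 V) = leg23 (mat_adj V)"
  unfolding mat_adj_def leg23_def by (auto simp: fun_eq_iff)
lemma adj_leg13: "mat_adj (leg13 V) = leg13 (mat_adj V)"
  unfolding mat_adj_def leg13_def by (auto simp: fun_eq_iff)

lemma t3_12: "t3 a b c = t12 (tensor a b) c" unfolding t3_def t12_def tensor_def by auto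
lemma t3_23: "t3 a b c = t23 a (tensor b c)" unfolding t3_def t23_def tensor_def by (auto simp: mult.assoc)
lemma t3_13: "t3 a b c = t13 (tensor a c) b" unfolding t3_def t13_def tensor_def by (auto simp: mult_ac)

lemma inner_t12: "inner_c (t12 X c) (t12 Y d) = inner_c X Y * inner_c c d"
  unfolding inner_c_def t12_def sum3 pair_sum[of "\<lambda>q. X q * cnj (Y q)"]
  by (simp add: sum_product sum_distrib_left sum_distrib_right mult_ac)

lemma inner_triple: "inner_c (X :: ('a::finite \<times> 'b::finite \<times> 'c::finite) vect) Y = (\<Sum>i\<in>UNIV. \<Sum>j\<in>UNIV. \<Sum>k\<in>UNIV. X (i,j,k) * cnj (Y (i,j,k)))"
  unfolding inner_c_def by (rule sum3)

lemma inner_t23: "inner_c (t23 a X) (t23 b Y) = inner_c a b * inner_c X Y"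
proof -
  have "inner_c a b * inner_c X Y = (\<Sum>i\<in>UNIV. a i * cnj (b i) * (\<Sum>j\<in>UNIV. \<Sum>k\<in>UNIV. X (j, k) * cnj (Y (j, k))))"
    unfolding inner_c_def[of a] inner_pair[of X] by (simp only: sum_distrib_right)
  also have "\<dots> = (\<Sum>i\<in>UNIV. \<Sum>j\<in>UNIV. \<Sum>k\<in>UNIV. a i * cnj (b i) * (X (j, k) * cnj (Y (j, k))))"
    by (simp only: sum_distrib_left)
  also have "\<dots> = inner_c (t23 a X) (t23 b Y)"
    unfolding inner_triple t23_def by (simp add: mult_ac)
  finally show ?thesis by simp
qed

lemma inner_t13: "inner_c (t13 X a) (t13 Y b) = inner_c a b * inner_c X Y"
proof -
  have "inner_c a b * inner_c X Y = (\<Sum>j\<in>UNIV. a j * cnj (b j) * (\<Sum>i\<in>UNIV. \<Sum>k\<in>UNIV. X (i, k) * cnj (Y (i, k))))"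
    unfolding inner_c_def[of a] inner_pair[of X] by (simp only: sum_distrib_right)
  also have "\<dots> = (\<Sum>j\<in>UNIV. \<Sum>i\<in>UNIV. \<Sum>k\<in>UNIV. a j * cnj (b j) * (X (i, k) * cnj (Y (i, k))))"
    by (simp only: sum_distrib_left)
  also have "\<dots> = (\<Sum>i\<in>UNIV. \<Sum>j\<in>UNIV. \<Sum>k\<in>UNIV. a j * cnj (b j) * (X (i, k) * cnj (Y (i, k))))"
    by (rule sum.swap)
  also have "\<dots> = inner_c (t13 X a) (t13 Y b)"
    unfolding inner_triple t13_def by (simp add: mult_ac)
  finally show ?thesis by simp
qed

lemma inner_t23_t13: "inner_c (t23 a W) (t13 Z b) = inner_c (tensor a (\<lambda>k. \<Sum>j\<in>UNIV. cnj (b j) * W (j, k))) Z"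
proof -
  have "inner_c (tensor a (\<lambda>k. \<Sum>j\<in>UNIV. cnj (b j) * W (j, k))) Z
     = (\<Sum>i\<in>UNIV. \<Sum>k\<in>UNIV. a i * (\<Sum>j\<in>UNIV. cnj (b j) * W (j, k)) * cnj (Z (i, k)))"
    unfolding inner_pair tensor_def by simp
  also have "\<dots> = (\<Sum>i\<in>UNIV. \<Sum>k\<in>UNIV. \<Sum>j\<in>UNIV. a i * (cnj (b j) * W (j, k)) * cnj (Z (i, k)))"
    by (simp only: sum_distrib_left sum_distrib_right)
  also have "\<dots> = (\<Sum>i\<in>UNIV. \<Sum>j\<in>UNIV. \<Sum>k\<in>UNIV. a i * (cnj (b j) * W (j, k)) * cnj (Z (i, k)))"
    by (rule sum.cong[OF refl], rule sum.swap)
  also have "\<dots> = inner_c (t23 a W) (t13 Z b)"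
    unfolding inner_triple t23_def t13_def by (simp add: mult_ac)
  finally show ?thesis by simp
qed

lemma inner_t13_t12: "inner_c (t13 W b) (t12 Z a) = inner_c (tensor (\<lambda>i. \<Sum>k\<in>UNIV. cnj (a k) * W (i, k)) b) Z"
proof -
  have "inner_c (tensor (\<lambda>i. \<Sum>k\<in>UNIV. cnj (a k) * W (i, k)) b) Z
     = (\<Sum>i\<in>UNIV. \<Sum>j\<in>UNIV. (\<Sum>k\<in>UNIV. cnj (a k) * W (i, k)) * b j * cnj (Z (i, j)))"
    unfolding inner_pair tensor_def by simp
  also have "\<dots> = (\<Sum>i\<in>UNIV. \<Sum>j\<in>UNIV. \<Sum>k\<in>UNIV. cnj (a k) * W (i, k) * b j * cnj (Z (i, j)))"
    by (simp only: sum_distrib_left sum_distrib_right)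
  also have "\<dots> = inner_c (t13 W b) (t12 Z a)"
    unfolding inner_triple t12_def t13_def by (simp add: mult_ac)
  finally show ?thesis by simp
qed


lemma tensor_add2: "tensor a (\<lambda>i. x i + y i) = (\<lambda>p. tensor a x p + tensor a y p)"
  unfolding tensor_def by (auto simp: distrib_left)
lemma tensor_add1: "tensor (\<lambda>i. x i + y i) a = (\<lambda>p. tensor x a p + tensor y a p)"
  unfolding tensor_def by (auto simp: distrib_right)
lemma tensor_diff2: "tensor a (\<lambda>i. x i - y i) = (\<lambda>p. tensor a x p - tensor a y p)"
  unfolding tensor_def by (auto simp: right_diff_distrib)
lemma tensor_diff1: "tensor (\<lambda>i. x i - y i) a = (\<lambda>p. tensor x a p - tensor y a p)"
  unfolding tensor_def by (auto simp: left_diff_distrib)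
lemma tensor_scale2: "tensor a (\<lambda>i. c * x i) = (\<lambda>p. c * tensor a x p)"
  unfolding tensor_def by (auto simp: mult_ac)
lemma tensor_scale1: "tensor (\<lambda>i. c * x i) a = (\<lambda>p. c * tensor x a p)"
  unfolding tensor_def by (auto simp: mult_ac)
lemma tensor_zero2: "tensor a (\<lambda>i. 0) = (\<lambda>p. 0)"
  unfolding tensor_def by auto
lemma tensor_zero1: "tensor (\<lambda>i. 0) a = (\<lambda>p. 0)"
  unfolding tensor_def by auto

definition Qv :: "('n::finite \<times> 'n) mat \<Rightarrow> 'n vect \<Rightarrow> 'n vect \<Rightarrow> 'n vect" where
  "Qv V f x = (\<lambda>k. \<Sum>j\<in>UNIV. cnj (f j) * ap V (tensor f x) (j, k))"
definition Rv :: "('n::finite \<times> 'n) mat \<Rightarrow> 'n vect \<Rightarrow> 'n vect \<Rightarrow> 'n vect" where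
  "Rv V f x = (\<lambda>i. \<Sum>k\<in>UNIV. cnj (f k) * ap V (tensor x f) (i, k))"

lemma Q_inner: "inner_c (Qv V f x) y = inner_c (ap V (tensor f x)) (tensor f y)"
proof -
  let ?W = "ap V (tensor f x)"
  have "inner_c ?W (tensor f y) = (\<Sum>j\<in>UNIV. \<Sum>k\<in>UNIV. ?W (j, k) * cnj (f j * y k))"
    unfolding inner_pair tensor_def by simp
  also have "\<dots> = (\<Sum>k\<in>UNIV. \<Sum>j\<in>UNIV. ?W (j, k) * cnj (f j * y k))"
    by (rule sum.swap)
  also have "\<dots> = (\<Sum>k\<in>UNIV. (\<Sum>j\<in>UNIV. cnj (f j) * ?W (j, k)) * cnj (y k))"
    by (simp only: sum_distrib_right) (simp add: mult_ac)
  also have "\<dots> = inner_c (Qv V f x) y"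
    unfolding inner_c_def Qv_def by simp
  finally show ?thesis by simp
qed

lemma R_inner: "inner_c (Rv V f x) y = inner_c (ap V (tensor x f)) (tensor y f)"
proof -
  let ?W = "ap V (tensor x f)"
  have "inner_c ?W (tensor y f) = (\<Sum>i\<in>UNIV. \<Sum>k\<in>UNIV. ?W (i, k) * cnj (y i * f k))"
    unfolding inner_pair tensor_def by simp
  also have "\<dots> = (\<Sum>i\<in>UNIV. (\<Sum>k\<in>UNIV. cnj (f k) * ?W (i, k)) * cnj (y i))"
    by (simp only: sum_distrib_right) (simp add: mult_ac)
  also have "\<dots> = inner_c (Rv V f x) y"
    unfolding inner_c_def Rv_def by simp
  finally show ?thesis by simp
qed

lemma Q_tensor: "tensor f (Qv V f x) = tensor f (\<lambda>k. \<Sum>j\<in>UNIV. cnj (f j) * ap V (tensor f x) (j, k))"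
  unfolding Qv_def by simp
lemma R_tensor: "tensor (Rv V f x) f = tensor (\<lambda>i. \<Sum>k\<in>UNIV. cnj (f k) * ap V (tensor x f) (i, k)) f"
  unfolding Rv_def by simp

locale mu =
  fixes V :: "('n::finite \<times> 'n) mat"
  assumes MU: "multiplicative_unitary V"
begin

lemma U: "unitary_mat V" using MU unfolding multiplicative_unitary_def by simp

lemma pent: "ap (leg12 V) (ap (leg13 V) (ap (leg23 V) X)) = ap (leg23 V) (ap (leg12 V) X)"
proof -
  have "mat_mult (mat_mult (leg12 V) (leg13 V)) (leg23 V) = mat_mult (leg23 V) (leg12 V)"
    using MU unfolding multiplicative_unitary_def by simp
  then have "ap (mat_mult (mat_mult (leg12 V) (leg13 V)) (leg23 V)) X = ap (mat_mult (leg23 V) (leg12 V)) X"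
    by simp
  then show ?thesis by (simp add: mat_apply_mult)
qed

definition sol :: "'n vect \<Rightarrow> bool" where "sol f \<longleftrightarrow> ap V (tensor f f) = tensor f f"

lemma sol_adj: "sol f \<Longrightarrow> ap (mat_adj V) (tensor f f) = tensor f f"
  unfolding sol_def using U unitary_fix_adj by blast

lemma Q_idem:
  assumes s: "sol f" and u: "inner_c f f = 1"
  shows "Qv V f (Qv V f x) = Qv V f x"
proof (rule inner_ext)
  fix y
  define W where "W = ap V (tensor f x)"
  define Z where "Z = ap (mat_adj V) (tensor f y)"
  have e12: "ap (leg12 V) (t3 f f x) = t3 f f x"
    using s unfolding sol_def by (simp add: t3_12 leg12_t12)
  have e23: "ap (leg23 V) (t3 f f x) = t23 f W"
    unfolding W_def by (simp add: t3_23 leg23_t23)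
  have P: "ap (leg12 V) (ap (leg13 V) (t23 f W)) = t23 f W"
    using pent[of "t3 f f x"] e12 e23 by simp
  have a12: "ap (mat_adj (leg12 V)) (t3 f f y) = t3 f f y"
    using sol_adj[OF s] by (simp add: adj_leg12 t3_12 leg12_t12)
  have a13: "ap (mat_adj (leg13 V)) (t3 f f y) = t13 Z f"
    unfolding Z_def by (simp add: adj_leg13 t3_13 leg13_t13)
  have "inner_c (Qv V f (Qv V f x)) y = inner_c (tensor f (Qv V f x)) Z"
    unfolding Z_def by (simp add: Q_inner inner_adj)
  also have "\<dots> = inner_c (t23 f W) (t13 Z f)"
    unfolding inner_t23_t13 Q_tensor W_def ..
  also have "\<dots> = inner_c (ap (leg13 V) (t23 f W)) (t3 f f y)"
    by (simp add: inner_adj a13)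
  also have "\<dots> = inner_c (ap (leg12 V) (ap (leg13 V) (t23 f W))) (t3 f f y)"
    by (simp add: inner_adj a12)
  also have "\<dots> = inner_c (t23 f W) (t23 f (tensor f y))"
    by (simp add: P t3_23)
  also have "\<dots> = inner_c (Qv V f x) y"
    by (simp add: inner_t23 u Q_inner W_def)
  finally show "inner_c (Qv V f (Qv V f x)) y = inner_c (Qv V f x) y" .
qed

lemma R_idem:
  assumes s: "sol f" and u: "inner_c f f = 1"
  shows "Rv V f (Rv V f x) = Rv V f x"
proof (rule inner_ext)
  fix y
  define W where "W = ap V (tensor x f)"
  define Z where "Z = ap (mat_adj V) (tensor y f)"
  have e23: "ap (leg23 V) (t3 x f f) = t3 x f f"
    using s unfolding sol_def by (simp add: t3_23 leg23_t23)
  have e13: "ap (leg13 V) (t3 x f f) = t13 W f"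
    unfolding W_def by (simp add: t3_13 leg13_t13)
  have P: "ap (leg12 V) (t13 W f) = ap (leg23 V) (ap (leg12 V) (t3 x f f))"
    using pent[of "t3 x f f"] e23 e13 by simp
  have a23: "ap (mat_adj (leg23 V)) (t3 y f f) = t3 y f f"
    using sol_adj[OF s] by (simp add: adj_leg23 t3_23 leg23_t23)
  have a12: "ap (mat_adj (leg12 V)) (t3 y f f) = t12 Z f"
    unfolding Z_def by (simp add: adj_leg12 t3_12 leg12_t12)
  have "inner_c (Rv V f (Rv V f x)) y = inner_c (tensor (Rv V f x) f) Z"
    unfolding Z_def by (simp add: R_inner inner_adj)
  also have "\<dots> = inner_c (t13 W f) (t12 Z f)"
    unfolding inner_t13_t12 R_tensor W_def ..
  also have "\<dots> = inner_c (ap (leg12 V) (t13 W f)) (t3 y f f)"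
    by (simp add: inner_adj a12)
  also have "\<dots> = inner_c (ap (leg12 V) (t3 x f f)) (t3 y f f)"
    by (simp add: P inner_adj a23)
  also have "\<dots> = inner_c (t12 W f) (t12 (tensor y f) f)"
    by (simp add: t3_12 leg12_t12 W_def)
  also have "\<dots> = inner_c (Rv V f x) y"
    by (simp add: inner_t12 u R_inner W_def)
  finally show "inner_c (Rv V f (Rv V f x)) y = inner_c (Rv V f x) y" .
qed

end

lemma nn_lin: "nn (\<lambda>i. x i + t * z i) = nn x + 2 * Re (cnj t * inner_c x z) + (cmod t)\<^sup>2 * nn z"
proof -
  have "inner_c (\<lambda>i. x i + t * z i) (\<lambda>i. x i + t * z i) = inner_c x x + cnj t * inner_c x z + t * inner_c z x + t * cnj t * inner_c z z"
    by (simp add: inner_add1 inner_add2 inner_scale1 inner_scale2 algebra_simps)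
  moreover have "Re (t * inner_c z x) = Re (cnj t * inner_c x z)"
    by (subst inner_c_cnj) (metis complex_cnj_cnj complex_cnj_mult cnj.sel(1))
  moreover have "t * cnj t * inner_c z z = of_real ((cmod t)\<^sup>2 * nn z)"
    using complex_norm_square[of t] by (simp add: inner_c_self_nn)
  ultimately show ?thesis unfolding nn_def by simp
qed

lemma ker_perp_ran:
  fixes T :: "('n::finite) vect \<Rightarrow> 'n vect"
  assumes lin: "\<And>x z t. T (\<lambda>i. x i + t * z i) = (\<lambda>i. T x i + t * T z i)"
    and contr: "\<And>w. nn (T w) \<le> nn w"
    and x: "T x = x" and z: "T z = (\<lambda>i. 0)"
  shows "inner_c x z = 0"
proof (rule ccontr)
  assume ne: "inner_c x z \<noteq> 0"
  define c where "c = inner_c x z"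
  define s :: real where "s = 1 / (nn z + 1)"
  have s0: "s > 0" unfolding s_def using nn_ge0[of z] by simp
  have s1: "s * nn z < 1" unfolding s_def using nn_ge0[of z] by (simp add: field_simps)
  define t where "t = - (of_real s * c)"
  have "T (\<lambda>i. x i + t * z i) = x" using lin[of x t z] x z by simp
  then have "nn x \<le> nn (\<lambda>i. x i + t * z i)" using contr by metis
  also have "\<dots> = nn x + 2 * Re (cnj t * c) + (cmod t)\<^sup>2 * nn z"
    unfolding nn_lin c_def ..
  finally have A: "0 \<le> 2 * Re (cnj t * c) + (cmod t)\<^sup>2 * nn z" by simp
  have B: "Re (cnj t * c) = - s * (cmod c)\<^sup>2"
    unfolding t_def using cmod_power2[of c] by (simp add: power2_eq_square algebra_simps)
  have C: "(cmod t)\<^sup>2 = s\<^sup>2 * (cmod c)\<^sup>2"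
    unfolding t_def using s0 by (simp add: norm_mult power_mult_distrib)
  have cpos: "(cmod c)\<^sup>2 > 0" using ne unfolding c_def by simp
  have A': "0 \<le> 2 * (- s * (cmod c)\<^sup>2) + s\<^sup>2 * (cmod c)\<^sup>2 * nn z"
    using A unfolding B C .
  have E: "s * (cmod c)\<^sup>2 * (s * nn z - 2) = 2 * (- s * (cmod c)\<^sup>2) + s\<^sup>2 * (cmod c)\<^sup>2 * nn z"
    by (simp add: algebra_simps power2_eq_square)
  have "0 \<le> s * (cmod c)\<^sup>2 * (s * nn z - 2)"
    using A' E by linarith
  moreover have "s * (cmod c)\<^sup>2 * (s * nn z - 2) < 0"
    using s0 s1 cpos by (simp add: mult_pos_neg)
  ultimately show False by simp
qed


lemma Q_lin: "Qv V f (\<lambda>i. x i + t * z i) = (\<lambda>i. Qv V f x i + t * Qv V f z i)"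
  unfolding Qv_def tensor_add2 tensor_scale2 mat_apply_add mat_apply_scale
  by (simp add: distrib_left sum.distrib sum_distrib_left mult_ac)

lemma R_lin: "Rv V f (\<lambda>i. x i + t * z i) = (\<lambda>i. Rv V f x i + t * Rv V f z i)"
  unfolding Rv_def tensor_add1 tensor_scale1 mat_apply_add mat_apply_scale
  by (simp add: distrib_left sum.distrib sum_distrib_left mult_ac)

lemma Q_diff: "Qv V f (\<lambda>i. x i - z i) = (\<lambda>i. Qv V f x i - Qv V f z i)"
  using Q_lin[of V f x "-1" z] by simp
lemma R_diff: "Rv V f (\<lambda>i. x i - z i) = (\<lambda>i. Rv V f x i - Rv V f z i)"
  using R_lin[of V f x "-1" z] by simp

context mu
begin

lemma Q_contr:
  assumes u: "inner_c f f = 1"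
  shows "nn (Qv V f x) \<le> nn x"
proof -
  have nf: "nn f = 1" using u unfolding nn_def by simp
  have "nn (Qv V f x) = Re (inner_c (ap V (tensor f x)) (tensor f (Qv V f x)))"
    unfolding nn_def Q_inner ..
  also have "\<dots> \<le> (nn (ap V (tensor f x)) + nn (tensor f (Qv V f x))) / 2"
    by (rule re_inner_le)
  also have "\<dots> = (nn x + nn (Qv V f x)) / 2"
    by (simp add: unitary_nn[OF U] nn_tensor nf)
  finally show ?thesis by simp
qed

lemma R_contr:
  assumes u: "inner_c f f = 1"
  shows "nn (Rv V f x) \<le> nn x"
proof -
  have nf: "nn f = 1" using u unfolding nn_def by simp
  have "nn (Rv V f x) = Re (inner_c (ap V (tensor x f)) (tensor (Rv V f x) f))"
    unfolding nn_def R_inner ..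
  also have "\<dots> \<le> (nn (ap V (tensor x f)) + nn (tensor (Rv V f x) f)) / 2"
    by (rule re_inner_le)
  also have "\<dots> = (nn x + nn (Rv V f x)) / 2"
    by (simp add: unitary_nn[OF U] nn_tensor nf)
  finally show ?thesis by simp
qed

lemma Q_fix_iff:
  assumes u: "inner_c f f = 1"
  shows "Qv V f y = y \<longleftrightarrow> ap V (tensor f y) = tensor f y"
proof
  assume q: "Qv V f y = y"
  have nf: "nn f = 1" using u unfolding nn_def by simp
  show "ap V (tensor f y) = tensor f y"
  proof (rule eq_of_nn)
    show "nn (ap V (tensor f y)) = nn (tensor f y)" by (simp add: unitary_nn[OF U])
    show "Re (inner_c (ap V (tensor f y)) (tensor f y)) = nn (ap V (tensor f y))"
      using q by (simp add: Q_inner[symmetric] unitary_inner[OF U] inner_tensor u nn_def)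
  qed
next
  assume a: "ap V (tensor f y) = tensor f y"
  show "Qv V f y = y"
    by (rule inner_ext) (simp add: Q_inner a inner_tensor u)
qed

lemma R_fix_iff:
  assumes u: "inner_c f f = 1"
  shows "Rv V f y = y \<longleftrightarrow> ap V (tensor y f) = tensor y f"
proof
  assume q: "Rv V f y = y"
  have nf: "nn f = 1" using u unfolding nn_def by simp
  show "ap V (tensor y f) = tensor y f"
  proof (rule eq_of_nn)
    show "nn (ap V (tensor y f)) = nn (tensor y f)" by (simp add: unitary_nn[OF U])
    show "Re (inner_c (ap V (tensor y f)) (tensor y f)) = nn (ap V (tensor y f))"
      using q by (simp add: R_inner[symmetric] unitary_inner[OF U] inner_tensor u nn_def)
  qed
next
  assume a: "ap V (tensor y f) = tensor y f"
  show "Rv V f y = y"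
    by (rule inner_ext) (simp add: R_inner a inner_tensor u)
qed

lemma Q_perp:
  assumes u: "inner_c f f = 1" and y: "Qv V f y = y" and z: "Qv V f z = (\<lambda>i. 0)"
  shows "inner_c y z = 0"
  by (rule ker_perp_ran[of "Qv V f"]) (auto simp: Q_lin Q_contr[OF u] y z)

lemma R_perp:
  assumes u: "inner_c f f = 1" and y: "Rv V f y = y" and z: "Rv V f z = (\<lambda>i. 0)"
  shows "inner_c y z = 0"
  by (rule ker_perp_ran[of "Rv V f"]) (auto simp: R_lin R_contr[OF u] y z)

end

lemma leg12_slice: "ap (leg12 A) X (i, j, k) = ap A (\<lambda>q. X (fst q, snd q, k)) (i, j)"
  unfolding leg12_ap unfolding mat_apply_def pair_sum by simp

lemma leg12_inv:
  assumes "unitary_mat V"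
  shows "ap (leg12 (mat_adj V)) (ap (leg12 V) X) = X"
proof
  fix p :: "'a \<times> 'a \<times> 'a"
  obtain i j k where p: "p = (i, j, k)" by (cases p) auto
  have "(\<lambda>q. ap (leg12 V) X (fst q, snd q, k)) = ap V (\<lambda>q. X (fst q, snd q, k))"
    by (rule ext) (simp add: leg12_slice)
  then show "ap (leg12 (mat_adj V)) (ap (leg12 V) X) p = X p"
    unfolding p leg12_slice by (simp add: unitary_ap2[OF assms])
qed

lemma t12_cancel: "c j \<noteq> 0 \<Longrightarrow> t12 X c = t12 Y c \<Longrightarrow> X = Y"
proof
  fix q :: "'a \<times> 'a"
  assume c: "c j \<noteq> 0" and e: "t12 X c = t12 Y c"
  obtain a b where q: "q = (a, b)" by (cases q) auto
  from fun_cong[OF e, of "(a, b, j)"] c show "X q = Y q" unfolding q t12_def by simp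
qed

lemma t23_cancel: "c j \<noteq> 0 \<Longrightarrow> t23 c X = t23 c Y \<Longrightarrow> X = Y"
proof
  fix q :: "'a \<times> 'a"
  assume c: "c j \<noteq> 0" and e: "t23 c X = t23 c Y"
  obtain a b where q: "q = (a, b)" by (cases q) auto
  from fun_cong[OF e, of "(j, a, b)"] c show "X q = Y q" unfolding q t23_def by simp
qed

lemma t13_cancel: "c j \<noteq> 0 \<Longrightarrow> t13 X c = t13 Y c \<Longrightarrow> X = Y"
proof
  fix q :: "'a \<times> 'a"
  assume c: "c j \<noteq> 0" and e: "t13 X c = t13 Y c"
  obtain a b where q: "q = (a, b)" by (cases q) auto
  from fun_cong[OF e, of "(a, j, b)"] c show "X q = Y q" unfolding q t13_def by simp
qed

lemma tensor_cancel1: "c j \<noteq> 0 \<Longrightarrow> tensor x c = tensor y c \<Longrightarrow> x = y"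
proof
  fix i assume c: "c j \<noteq> 0" and e: "tensor x c = tensor y c"
  from fun_cong[OF e, of "(i, j)"] c show "x i = y i" unfolding tensor_def by simp
qed

lemma unit_nz: "inner_c f f = 1 \<Longrightarrow> \<exists>j. f j \<noteq> 0"
  using inner_zero1[of f] by (metis (no_types, lifting) ext zero_neq_one)

context mu
begin

lemma stepB:
  assumes s: "sol f" and fj: "f j \<noteq> 0" and h: "ap V (tensor f u) = tensor w f"
  shows "ap V (tensor f w) = tensor f w"
proof -
  have s': "ap V (tensor f f) = tensor f f" using s unfolding sol_def .
  have "ap (leg23 V) (t3 f f u) = t3 f w f" by (simp add: t3_23 leg23_t23 h)
  moreover have "ap (leg13 V) (t3 f w f) = t3 f w f" by (simp add: t3_13 leg13_t13 s')
  moreover have "ap (leg12 V) (t3 f w f) = t12 (ap V (tensor f w)) f" by (simp add: t3_12 leg12_t12)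
  moreover have "ap (leg12 V) (t3 f f u) = t3 f f u" by (simp add: t3_12 leg12_t12 s')
  ultimately have "t12 (ap V (tensor f w)) f = t12 (tensor f w) f"
    using pent[of "t3 f f u"] by (simp add: t3_12)
  then show ?thesis by (rule t12_cancel[of f j, OF fj])
qed

lemma stepC:
  assumes s: "sol f" and fj: "f j \<noteq> 0" and h: "ap V (tensor u f) = tensor f w"
  shows "ap V (tensor w f) = tensor f w"
proof -
  have s': "ap V (tensor f f) = tensor f f" using s unfolding sol_def .
  have "ap (leg23 V) (t3 u f f) = t3 u f f" by (simp add: t3_23 leg23_t23 s')
  moreover have "ap (leg13 V) (t3 u f f) = t3 f f w" by (simp add: t3_13 leg13_t13 h)
  moreover have "ap (leg12 V) (t3 f f w) = t3 f f w" by (simp add: t3_12 leg12_t12 s')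
  moreover have "ap (leg12 V) (t3 u f f) = t3 f w f" by (simp add: t3_12 leg12_t12 h)
  moreover have "ap (leg23 V) (t3 f w f) = t23 f (ap V (tensor w f))" by (simp add: t3_23 leg23_t23)
  ultimately have "t23 f (tensor f w) = t23 f (ap V (tensor w f))"
    using pent[of "t3 u f f"] by (simp add: t3_23)
  then show ?thesis by (metis t23_cancel[of f j, OF fj])
qed

lemma K5:
  assumes fj: "f j \<noteq> 0" and ha: "ap V (tensor a f) = tensor a f" and hb: "ap V (tensor f b) = tensor f b"
  shows "ap V (tensor a b) = tensor a b"
proof -
  have "ap (leg23 V) (t3 a f b) = t3 a f b" by (simp add: t3_23 leg23_t23 hb)
  moreover have "ap (leg13 V) (t3 a f b) = t13 (ap V (tensor a b)) f" by (simp add: t3_13 leg13_t13)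
  moreover have "ap (leg12 V) (t3 a f b) = t3 a f b" by (simp add: t3_12 leg12_t12 ha)
  ultimately have e: "ap (leg12 V) (t13 (ap V (tensor a b)) f) = t3 a f b"
    using pent[of "t3 a f b"] by simp
  have ha': "ap (mat_adj V) (tensor a f) = tensor a f" using ha U unitary_fix_adj by blast
  have "t13 (ap V (tensor a b)) f = ap (leg12 (mat_adj V)) (t3 a f b)"
    using leg12_inv[OF U, of "t13 (ap V (tensor a b)) f"] e by simp
  also have "\<dots> = t13 (tensor a b) f" by (simp add: t3_12 leg12_t12 ha' t3_13[symmetric])
  finally show ?thesis by (rule t13_cancel[of f j, OF fj])
qed

end

context mu
begin

lemma tangent:
  assumes s: "sol f" and u: "inner_c f f = 1"
    and L: "(\<lambda>p. ap V (tensor f d) p + ap V (tensor d f) p) = (\<lambda>p. tensor f d p + tensor d f p)"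
  shows "Qv V f d = d \<and> Rv V f d = d"
proof -
  obtain j where fj: "f j \<noteq> 0" using unit_nz[OF u] by blast
  have nf: "nn f = 1" using u unfolding nn_def by simp
  have s': "ap V (tensor f f) = tensor f f" using s unfolding sol_def .
  define da where "da = Qv V f d"
  define db where "db = (\<lambda>i. d i - da i)"
  define dc where "dc = Rv V f d"
  define dd where "dd = (\<lambda>i. d i - dc i)"
  have Qda: "Qv V f da = da" unfolding da_def by (rule Q_idem[OF s u])
  have Qdb: "Qv V f db = (\<lambda>i. 0)" unfolding db_def Q_diff da_def Q_idem[OF s u] by simp
  have Rdc: "Rv V f dc = dc" unfolding dc_def by (rule R_idem[OF s u])
  have Rdd: "Rv V f dd = (\<lambda>i. 0)" unfolding dd_def R_diff dc_def R_idem[OF s u] by simp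
  have Vda: "ap V (tensor f da) = tensor f da" using Qda Q_fix_iff[OF u] by blast
  have Vdc: "ap V (tensor dc f) = tensor dc f" using Rdc R_fix_iff[OF u] by blast
  have Qf: "Qv V f f = f" using s' Q_fix_iff[OF u] by blast
  have Rf: "Rv V f f = f" using s' R_fix_iff[OF u] by blast
  have ip1: "inner_c db f = 0"
    using Q_perp[OF u Qf Qdb] inner_c_cnj[of db f] by simp
  have ip2: "inner_c dd f = 0"
    using R_perp[OF u Rf Rdd] inner_c_cnj[of dd f] by simp
  define X where "X = ap V (tensor f db)"
  define Y where "Y = ap V (tensor dd f)"
  define A where "A = tensor f db"
  define B where "B = tensor dd f"
  have dadb: "d = (\<lambda>i. da i + db i)" unfolding db_def by simp
  have dcdd: "d = (\<lambda>i. dc i + dd i)" unfolding dd_def by simp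
  have X_eq: "\<And>p. X p = ap V (tensor f d) p - tensor f da p"
    unfolding X_def db_def tensor_diff2 mat_apply_diff Vda by simp
  have Y_eq: "\<And>p. Y p = ap V (tensor d f) p - tensor dc f p"
    unfolding Y_def dd_def tensor_diff1 mat_apply_diff Vdc by simp
  have A_eq: "\<And>p. A p = tensor f d p - tensor f da p"
    unfolding A_def db_def tensor_diff2 by simp
  have B_eq: "\<And>p. B p = tensor d f p - tensor dc f p"
    unfolding B_def dd_def tensor_diff1 by simp
  have Lp: "\<And>p. ap V (tensor f d) p + ap V (tensor d f) p = tensor f d p + tensor d f p"
    using L by metis
  have sumXY: "X p + Y p = A p + B p" for p
  proof -
    have "X p + Y p = (ap V (tensor f d) p + ap V (tensor d f) p) - tensor f da p - tensor dc f p"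
      unfolding X_eq Y_eq by (simp add: algebra_simps)
    also have "\<dots> = (tensor f d p + tensor d f p) - tensor f da p - tensor dc f p"
      unfolding Lp ..
    also have "\<dots> = A p + B p"
      unfolding A_eq B_eq by (simp add: algebra_simps)
    finally show ?thesis .
  qed
  have Xs: "X = (\<lambda>p. A p + B p - Y p)" using sumXY by (auto simp: algebra_simps)
  have Ys: "Y = (\<lambda>p. A p + B p - X p)" using sumXY by (auto simp: algebra_simps)
  have XB0: "inner_c Y B = 0"
    unfolding B_def Y_def R_inner[symmetric] Rdd by (simp add: inner_zero1)
  have XA0: "inner_c X A = 0"
    unfolding A_def X_def Q_inner[symmetric] Qdb by (simp add: inner_zero1)
  have AB: "inner_c A B = 0" unfolding A_def B_def inner_tensor using ip1 by simp
  have BA: "inner_c B A = 0" unfolding A_def B_def inner_tensor using ip2 by simp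
  have nX: "nn X = nn db" unfolding X_def by (simp add: unitary_nn[OF U] nn_tensor nf)
  have nY: "nn Y = nn dd" unfolding Y_def by (simp add: unitary_nn[OF U] nn_tensor nf)
  have nA: "nn A = nn db" unfolding A_def by (simp add: nn_tensor nf)
  have nB: "nn B = nn dd" unfolding B_def by (simp add: nn_tensor nf)
  have iXB: "inner_c X B = inner_c B B"
    apply (subst Xs) unfolding inner_diff1 inner_add1 using AB XB0 by simp
  have iYA: "inner_c Y A = inner_c A A"
    apply (subst Ys) unfolding inner_diff1 inner_add1 using BA XA0 by simp
  have n1: "nn (\<lambda>p. X p - B p) = nn db - nn dd"
    using nn_diff[of X B] iXB nX nB unfolding nn_def by simp
  have n2: "nn (\<lambda>p. Y p - A p) = nn dd - nn db"
    using nn_diff[of Y A] iYA nY nA unfolding nn_def by simp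
  have "nn (\<lambda>p. X p - B p) = 0" using n1 n2 nn_ge0[of "\<lambda>p. X p - B p"] nn_ge0[of "\<lambda>p. Y p - A p"] by linarith
  then have "\<And>p. X p - B p = 0" using nn_zero by metis
  then have XB: "X = B" by auto
  have "nn (\<lambda>p. Y p - A p) = 0" using n1 n2 nn_ge0[of "\<lambda>p. X p - B p"] nn_ge0[of "\<lambda>p. Y p - A p"] by linarith
  then have "\<And>p. Y p - A p = 0" using nn_zero by metis
  then have YA: "Y = A" by auto
  have h1: "ap V (tensor f db) = tensor dd f" using XB unfolding X_def B_def .
  have h2: "ap V (tensor dd f) = tensor f db" using YA unfolding Y_def A_def .
  have Qdd: "Qv V f dd = dd" using stepB[OF s fj h1] Q_fix_iff[OF u] by blast
  have "ap V (tensor db f) = tensor f db" by (rule stepC[OF s fj h2])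
  then have "ap V (tensor db f) = ap V (tensor dd f)" using h2 by simp
  then have "tensor db f = tensor dd f" by (rule unitary_inj[OF U])
  then have dbdd: "db = dd" by (rule tensor_cancel1[of f j, OF fj])
  have dd0: "dd = (\<lambda>i. 0)" using Qdd Qdb dbdd by simp
  have db0: "db = (\<lambda>i. 0)" using dd0 dbdd by simp
  have "d = da" using dadb db0 by simp
  moreover have "d = dc" using dcdd dd0 by simp
  ultimately show ?thesis using Qda Rdc by simp
qed

end

lemma dlt_sum: "(\<Sum>k\<in>(UNIV::'a::finite set). cnj (dlt c k) * g k) = (g c :: complex)"
proof -
  have "\<And>k. cnj (dlt c k) * g k = (if c = k then g c else 0)" by (auto simp: dlt_def)
  then show ?thesis by simp
qed

lemma dlt_sum2: "(\<Sum>k\<in>(UNIV::'a::finite set). g k * dlt c k) = (g c :: complex)"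
proof -
  have "\<And>k. g k * dlt c k = (if c = k then g c else 0)" by (auto simp: dlt_def)
  then show ?thesis by simp
qed

lemma tensor_dlt_dlt: "tensor (dlt b) (dlt c) = dlt (b, c)"
  unfolding tensor_def dlt_def by (auto simp: fun_eq_iff)

lemma ap_dlt: "ap A (dlt q) p = A p q"
  unfolding mat_apply_def using dlt_sum2[of "A p" q] by simp

lemma inner_tensor_dlt: "inner_c X (tensor y (dlt j)) = (\<Sum>i\<in>UNIV. X (i, j) * cnj (y i))"
proof -
  have "inner_c X (tensor y (dlt j)) = (\<Sum>i\<in>UNIV. \<Sum>k\<in>UNIV. (X (i, k) * cnj (y i)) * cnj (dlt j k))"
    unfolding inner_pair tensor_def by (simp add: mult_ac)
  also have "\<dots> = (\<Sum>i\<in>UNIV. cnj (y i) * (\<Sum>k\<in>UNIV. cnj (dlt j k) * X (i, k)))"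
    by (simp add: sum_distrib_left mult_ac)
  also have "\<dots> = (\<Sum>i\<in>UNIV. X (i, j) * cnj (y i))"
    unfolding dlt_sum by (simp add: mult.commute)
  finally show ?thesis .
qed

lemma tensor_dlt_ap: "ap V (tensor x (dlt j)) (i, l) = (\<Sum>a\<in>UNIV. V (i, l) (a, j) * x a)"
proof -
  have "ap V (tensor x (dlt j)) (i, l) = (\<Sum>a\<in>UNIV. \<Sum>b\<in>UNIV. (V (i, l) (a, b) * x a) * dlt j b)"
    unfolding mat_apply_def pair_sum tensor_def by (simp add: mult_ac)
  also have "\<dots> = (\<Sum>a\<in>UNIV. V (i, l) (a, j) * x a)"
    by (simp only: dlt_sum2)
  finally show ?thesis .
qed

lemma inner_sum1: "inner_c (\<lambda>i. \<Sum>c\<in>UNIV. h c i) y = (\<Sum>c\<in>UNIV. inner_c (h c) y)"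
  unfolding inner_c_def by (simp add: sum_distrib_right) (rule sum.swap)

lemma ap_sum: "ap A (\<lambda>i. \<Sum>c\<in>UNIV. h c i) = (\<lambda>p. \<Sum>c\<in>UNIV. ap A (h c) p)"
  unfolding mat_apply_def by (rule ext) (simp add: sum_distrib_left, rule sum.swap)

context mu
begin

definition Fm :: "'n mat" where "Fm = (\<lambda>i i'. (\<Sum>j\<in>UNIV. V (i, j) (i', j)) / (of_nat CARD('n) :: complex))"
definition Fv :: "'n vect \<Rightarrow> 'n vect" where "Fv x = ap Fm x"

lemma NN_nz: "(of_nat CARD('n) :: complex) \<noteq> 0" by simp

lemma Fv_alt: "Fv x i = (\<Sum>j\<in>UNIV. ap V (tensor x (dlt j)) (i, j)) / (of_nat CARD('n) :: complex)"
  unfolding tensor_dlt_ap unfolding Fv_def Fm_def mat_apply_def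
  by (simp add: sum_divide_distrib sum_distrib_right) (rule sum.swap)

lemma F_inner: "inner_c (Fv x) y = (\<Sum>j\<in>UNIV. inner_c (ap V (tensor x (dlt j))) (tensor y (dlt j))) / (of_nat CARD('n) :: complex)"
proof -
  have "inner_c (Fv x) y = (\<Sum>i\<in>UNIV. \<Sum>j\<in>UNIV. ap V (tensor x (dlt j)) (i, j) * cnj (y i)) / (of_nat CARD('n) :: complex)"
    unfolding inner_c_def Fv_alt by (simp add: sum_divide_distrib sum_distrib_right)
  also have "\<dots> = (\<Sum>j\<in>UNIV. \<Sum>i\<in>UNIV. ap V (tensor x (dlt j)) (i, j) * cnj (y i)) / (of_nat CARD('n) :: complex)"
    by (subst sum.swap) (rule refl)
  also have "\<dots> = (\<Sum>j\<in>UNIV. inner_c (ap V (tensor x (dlt j))) (tensor y (dlt j))) / (of_nat CARD('n) :: complex)"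
    unfolding inner_tensor_dlt ..
  finally show ?thesis .
qed

end

lemma rot3: "(\<Sum>a\<in>A. \<Sum>b\<in>B. \<Sum>c\<in>C. f a b c) = (\<Sum>b\<in>B. \<Sum>c\<in>C. \<Sum>a\<in>A. f a b c)"
proof -
  have "(\<Sum>a\<in>A. \<Sum>b\<in>B. \<Sum>c\<in>C. f a b c) = (\<Sum>b\<in>B. \<Sum>a\<in>A. \<Sum>c\<in>C. f a b c)"
    by (rule sum.swap)
  also have "\<dots> = (\<Sum>b\<in>B. \<Sum>c\<in>C. \<Sum>a\<in>A. f a b c)"
    by (rule sum.cong[OF refl], rule sum.swap)
  finally show ?thesis .
qed

lemma slice_inner: "inner_c (ap (leg12 V) (t23 x W)) (t23 y W)
   = (\<Sum>k\<in>UNIV. inner_c (ap V (tensor x (\<lambda>j. W (j, k)))) (tensor y (\<lambda>j. W (j, k))))"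
proof -
  have a: "ap (leg12 V) (t23 x W) (i, j, k) = ap V (tensor x (\<lambda>j. W (j, k))) (i, j)" for i j k
  proof -
    have "(\<lambda>q. t23 x W (fst q, snd q, k)) = tensor x (\<lambda>j. W (j, k))"
      unfolding t23_def tensor_def by auto
    then show ?thesis unfolding leg12_slice by simp
  qed
  have b: "t23 y W (i, j, k) = tensor y (\<lambda>j. W (j, k)) (i, j)" for i j k
    unfolding t23_def tensor_def by simp
  have "inner_c (ap (leg12 V) (t23 x W)) (t23 y W)
     = (\<Sum>i\<in>UNIV. \<Sum>j\<in>UNIV. \<Sum>k\<in>UNIV. ap V (tensor x (\<lambda>j. W (j, k))) (i, j) * cnj (tensor y (\<lambda>j. W (j, k)) (i, j)))"
    unfolding inner_triple a b ..
  also have "\<dots> = (\<Sum>k\<in>UNIV. \<Sum>i\<in>UNIV. \<Sum>j\<in>UNIV. ap V (tensor x (\<lambda>j. W (j, k))) (i, j) * cnj (tensor y (\<lambda>j. W (j, k)) (i, j)))"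
    by (rule rot3[symmetric])
  also have "\<dots> = (\<Sum>k\<in>UNIV. inner_c (ap V (tensor x (\<lambda>j. W (j, k)))) (tensor y (\<lambda>j. W (j, k))))"
    unfolding inner_pair ..
  finally show ?thesis .
qed

definition Sm :: "('n::finite \<times> 'n) mat \<Rightarrow> 'n vect \<Rightarrow> 'n vect \<Rightarrow> 'n mat" where
  "Sm V x y = (\<lambda>j j'. \<Sum>i\<in>UNIV. \<Sum>i'\<in>UNIV. cnj (y i) * V (i, j) (i', j') * x i')"

lemma S_form: "inner_c (ap V (tensor x w)) (tensor y w) = (\<Sum>j\<in>UNIV. \<Sum>j'\<in>UNIV. Sm V x y j j' * w j' * cnj (w j))"
proof -
  have "inner_c (ap V (tensor x w)) (tensor y w)
     = (\<Sum>i\<in>UNIV. \<Sum>j\<in>UNIV. \<Sum>i'\<in>UNIV. \<Sum>j'\<in>UNIV. cnj (y i) * V (i, j) (i', j') * x i' * w j' * cnj (w j))"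
    unfolding inner_pair mat_apply_def pair_sum tensor_def
    by (simp add: sum_distrib_left sum_distrib_right mult_ac)
  also have "\<dots> = (\<Sum>j\<in>UNIV. \<Sum>i\<in>UNIV. \<Sum>i'\<in>UNIV. \<Sum>j'\<in>UNIV. cnj (y i) * V (i, j) (i', j') * x i' * w j' * cnj (w j))"
    by (rule sum.swap)
  also have "\<dots> = (\<Sum>j\<in>UNIV. \<Sum>j'\<in>UNIV. \<Sum>i\<in>UNIV. \<Sum>i'\<in>UNIV. cnj (y i) * V (i, j) (i', j') * x i' * w j' * cnj (w j))"
    by (rule sum.cong[OF refl], rule rot3[symmetric])
  also have "\<dots> = (\<Sum>j\<in>UNIV. \<Sum>j'\<in>UNIV. Sm V x y j j' * w j' * cnj (w j))"
    unfolding Sm_def by (simp add: sum_distrib_left sum_distrib_right mult_ac)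
  finally show ?thesis .
qed


context mu
begin

lemma W_orth: "(\<Sum>q\<in>UNIV. ap (mat_adj V) (dlt q) (j', k) * cnj (ap (mat_adj V) (dlt q) (j, k))) = (if j' = j then 1 else 0)"
proof -
  have "(\<Sum>q\<in>UNIV. ap (mat_adj V) (dlt q) (j', k) * cnj (ap (mat_adj V) (dlt q) (j, k)))
      = mat_mult (mat_adj V) V (j', k) (j, k)"
    unfolding ap_dlt mat_mult_def mat_adj_def by simp
  also have "\<dots> = (if j' = j then 1 else 0)"
    using U unfolding unitary_mat_def mat_id_def by simp
  finally show ?thesis .
qed

lemma NF: "of_nat CARD('n) * Fv x i = (\<Sum>i'\<in>UNIV. (\<Sum>j\<in>UNIV. V (i, j) (i', j)) * x i')"
  unfolding Fv_def Fm_def mat_apply_def by (simp add: sum_distrib_left)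

lemma trace_part:
  "(\<Sum>q\<in>UNIV. inner_c (ap (leg12 V) (t23 x (ap (mat_adj V) (dlt q)))) (t23 y (ap (mat_adj V) (dlt q))))
    = of_nat CARD('n) * of_nat CARD('n) * inner_c (Fv x) y"
proof -
  define W where "W = (\<lambda>q. ap (mat_adj V) (dlt q))"
  define S where "S = Sm V x y"
  have "(\<Sum>q\<in>UNIV. inner_c (ap (leg12 V) (t23 x (W q))) (t23 y (W q)))
      = (\<Sum>q\<in>UNIV. \<Sum>k\<in>UNIV. \<Sum>j\<in>UNIV. \<Sum>j'\<in>UNIV. S j j' * W q (j', k) * cnj (W q (j, k)))"
    unfolding slice_inner S_form S_def ..
  also have "\<dots> = (\<Sum>k\<in>UNIV. \<Sum>j\<in>UNIV. \<Sum>q\<in>UNIV. \<Sum>j'\<in>UNIV. S j j' * W q (j', k) * cnj (W q (j, k)))"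
    by (rule rot3)
  also have "\<dots> = (\<Sum>k\<in>UNIV. \<Sum>j\<in>UNIV. \<Sum>j'\<in>UNIV. \<Sum>q\<in>UNIV. S j j' * W q (j', k) * cnj (W q (j, k)))"
    by (rule sum.cong[OF refl], rule sum.cong[OF refl], rule sum.swap)
  also have "\<dots> = (\<Sum>k\<in>(UNIV::'n set). \<Sum>j\<in>UNIV. \<Sum>j'\<in>UNIV. S j j' * (if j' = j then 1 else 0))"
  proof -
    have inner: "(\<Sum>q\<in>UNIV. S j j' * W q (j', k) * cnj (W q (j, k))) = S j j' * (if j' = j then 1 else 0)" for k j j'
    proof -
      have "(\<Sum>q\<in>UNIV. S j j' * W q (j', k) * cnj (W q (j, k))) = S j j' * (\<Sum>q\<in>UNIV. W q (j', k) * cnj (W q (j, k)))"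
        by (simp add: sum_distrib_left mult.assoc)
      also have "\<dots> = S j j' * (if j' = j then 1 else 0)" unfolding W_def W_orth ..
      finally show ?thesis .
    qed
    show ?thesis by (simp only: inner)
  qed
  also have "\<dots> = (\<Sum>k\<in>(UNIV::'n set). \<Sum>j\<in>UNIV. S j j)"
    by (simp add: if_distrib[where f="\<lambda>z. _ * z"] cong: if_cong)
  also have "\<dots> = of_nat CARD('n) * (\<Sum>j\<in>UNIV. S j j)"
    by simp
  also have "(\<Sum>j\<in>UNIV. S j j) = (\<Sum>i\<in>UNIV. \<Sum>i'\<in>UNIV. \<Sum>j\<in>UNIV. cnj (y i) * V (i, j) (i', j) * x i')"
    unfolding S_def Sm_def by (rule rot3)
  also have "\<dots> = inner_c (\<lambda>i. of_nat CARD('n) * Fv x i) y"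
    unfolding NF inner_c_def
    by (simp add: sum_distrib_left sum_distrib_right mult_ac)
  also have "\<dots> = of_nat CARD('n) * inner_c (Fv x) y"
    by (rule inner_scale1)
  finally show ?thesis unfolding W_def by (simp add: mult_ac)
qed

end

context mu
begin

lemma F_local:
  "inner_c (ap V (tensor (\<lambda>i. ap V (tensor x (dlt c)) (i, c)) (dlt b))) (tensor y (dlt b))
   = inner_c (ap (leg12 V) (t23 x (ap (mat_adj V) (dlt (b, c))))) (t23 y (ap (mat_adj V) (dlt (b, c))))"
proof -
  define W where "W = ap (mat_adj V) (dlt (b, c))"
  have VW: "ap V W = tensor (dlt b) (dlt c)" unfolding W_def tensor_dlt_dlt by (rule unitary_ap1[OF U])
  have e23: "ap (leg23 V) (t23 x W) = t3 x (dlt b) (dlt c)" by (simp add: leg23_t23 VW t3_23)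
  have P: "ap (leg12 V) (ap (leg13 V) (t3 x (dlt b) (dlt c))) = ap (leg23 V) (ap (leg12 V) (t23 x W))"
    using pent[of "t23 x W"] e23 by simp
  have a23: "ap (mat_adj (leg23 V)) (t3 y (dlt b) (dlt c)) = t23 y W"
    unfolding W_def by (simp add: adj_leg23 t3_23 leg23_t23 tensor_dlt_dlt)
  have a12: "ap (mat_adj (leg12 V)) (t3 y (dlt b) (dlt c)) = t12 (ap (mat_adj V) (tensor y (dlt b))) (dlt c)"
    by (simp add: adj_leg12 t3_12 leg12_t12)
  have e13: "ap (leg13 V) (t3 x (dlt b) (dlt c)) = t13 (ap V (tensor x (dlt c))) (dlt b)"
    by (simp add: t3_13 leg13_t13)
  have g: "(\<lambda>i. \<Sum>k\<in>UNIV. cnj (dlt c k) * ap V (tensor x (dlt c)) (i, k)) = (\<lambda>i. ap V (tensor x (dlt c)) (i, c))"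
    by (simp add: dlt_sum)
  have "inner_c (ap (leg12 V) (t23 x W)) (t23 y W) = inner_c (ap (leg23 V) (ap (leg12 V) (t23 x W))) (t3 y (dlt b) (dlt c))"
    by (simp add: inner_adj a23)
  also have "\<dots> = inner_c (ap (leg13 V) (t3 x (dlt b) (dlt c))) (ap (mat_adj (leg12 V)) (t3 y (dlt b) (dlt c)))"
    by (simp add: P[symmetric] inner_adj)
  also have "\<dots> = inner_c (tensor (\<lambda>i. ap V (tensor x (dlt c)) (i, c)) (dlt b)) (ap (mat_adj V) (tensor y (dlt b)))"
    unfolding e13 a12 inner_t13_t12 g ..
  also have "\<dots> = inner_c (ap V (tensor (\<lambda>i. ap V (tensor x (dlt c)) (i, c)) (dlt b))) (tensor y (dlt b))"
    by (simp add: inner_adj)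
  finally show ?thesis unfolding W_def by simp
qed

lemma F_idem: "Fv (Fv x) = Fv x"
proof (rule inner_ext)
  fix y
  define N :: complex where "N = of_nat CARD('n)"
  have N0: "N \<noteq> 0" unfolding N_def by simp
  define g where "g = (\<lambda>c i. ap V (tensor x (dlt c)) (i, c))"
  have gs: "(\<lambda>i. \<Sum>c\<in>UNIV. g c i) = (\<lambda>i. N * Fv x i)"
    unfolding g_def N_def Fv_alt by simp
  have "N * N * inner_c (Fv x) y
      = (\<Sum>q\<in>UNIV. inner_c (ap (leg12 V) (t23 x (ap (mat_adj V) (dlt q)))) (t23 y (ap (mat_adj V) (dlt q))))"
    unfolding N_def trace_part ..
  also have "\<dots> = (\<Sum>b\<in>UNIV. \<Sum>c\<in>UNIV. inner_c (ap V (tensor (g c) (dlt b))) (tensor y (dlt b)))"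
    unfolding pair_sum F_local g_def ..
  also have "\<dots> = (\<Sum>c\<in>UNIV. \<Sum>b\<in>UNIV. inner_c (ap V (tensor (g c) (dlt b))) (tensor y (dlt b)))"
    by (rule sum.swap)
  also have "\<dots> = (\<Sum>c\<in>UNIV. N * inner_c (Fv (g c)) y)"
    unfolding F_inner N_def using NN_nz by simp
  also have "\<dots> = N * inner_c (\<lambda>i. \<Sum>c\<in>UNIV. Fv (g c) i) y"
    unfolding inner_sum1 by (simp add: sum_distrib_left)
  also have "(\<lambda>i. \<Sum>c\<in>UNIV. Fv (g c) i) = Fv (\<lambda>i. N * Fv x i)"
    unfolding Fv_def ap_sum[symmetric] gs[unfolded Fv_def] ..
  also have "Fv (\<lambda>i. N * Fv x i) = (\<lambda>i. N * Fv (Fv x) i)"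
    unfolding Fv_def mat_apply_scale ..
  finally have "N * N * inner_c (Fv x) y = N * N * inner_c (Fv (Fv x)) y"
    by (simp add: inner_scale1 mult.assoc)
  then show "inner_c (Fv (Fv x)) y = inner_c (Fv x) y" using N0 by simp
qed

end

lemma nn_dlt: "nn (dlt j) = 1"
  unfolding nn_def inner_dlt by (simp add: dlt_def)

lemma tensor_expand: "tensor f (x :: ('a::finite) vect) = (\<lambda>p. \<Sum>j\<in>UNIV. x j * tensor f (dlt j) p)"
proof
  fix p :: "'a \<times> 'a"
  obtain a b where p: "p = (a, b)" by (cases p) auto
  have "(\<Sum>j\<in>UNIV. x j * tensor f (dlt j) p) = f a * (\<Sum>j\<in>UNIV. x j * dlt j b)"
    unfolding p tensor_def by (simp add: sum_distrib_left mult_ac)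
  also have "(\<Sum>j\<in>UNIV. x j * dlt j b) = x b"
    using dlt_sum2[of x b] unfolding dlt_def by (simp add: eq_commute)
  finally show "tensor f x p = (\<Sum>j\<in>UNIV. x j * tensor f (dlt j) p)"
    unfolding p tensor_def by simp
qed

lemma Q_expand: "Qv V f x k = (\<Sum>j\<in>UNIV. x j * Qv V f (dlt j) k)"
proof -
  have "ap V (tensor f x) = (\<lambda>p. \<Sum>j\<in>UNIV. x j * ap V (tensor f (dlt j)) p)"
    by (subst tensor_expand) (simp add: ap_sum mat_apply_scale)
  then have "Qv V f x k = (\<Sum>i\<in>UNIV. \<Sum>j\<in>UNIV. cnj (f i) * (x j * ap V (tensor f (dlt j)) (i, k)))"
    unfolding Qv_def by (simp add: sum_distrib_left)
  also have "\<dots> = (\<Sum>j\<in>UNIV. \<Sum>i\<in>UNIV. cnj (f i) * (x j * ap V (tensor f (dlt j)) (i, k)))"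
    by (rule sum.swap)
  also have "\<dots> = (\<Sum>j\<in>UNIV. x j * Qv V f (dlt j) k)"
    unfolding Qv_def by (simp add: sum_distrib_left mult_ac)
  finally show ?thesis .
qed

context mu
begin

lemma fixed_of_basis:
  assumes h: "\<And>j. ap V (tensor z (dlt j)) = tensor z (dlt j)"
  shows "z \<in> fixed_vectors V"
  unfolding fixed_vectors_def
proof (intro CollectI allI)
  fix \<eta>
  have "ap V (tensor z \<eta>) = (\<lambda>p. \<Sum>j\<in>UNIV. \<eta> j * ap V (tensor z (dlt j)) p)"
    by (subst tensor_expand) (simp add: ap_sum mat_apply_scale)
  also have "\<dots> = (\<lambda>p. \<Sum>j\<in>UNIV. \<eta> j * tensor z (dlt j) p)" using h by simp
  also have "\<dots> = tensor z \<eta>" by (rule tensor_expand[symmetric])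
  finally show "ap V (tensor z \<eta>) = tensor z \<eta>" .
qed

lemma F_fixed:
  assumes Fz: "Fv z = z"
  shows "z \<in> fixed_vectors V"
proof (rule fixed_of_basis)
  fix j
  define r where "r = (\<lambda>j. Re (inner_c (ap V (tensor z (dlt j))) (tensor z (dlt j))))"
  have le: "r j' \<le> nn z" for j'
  proof -
    have "r j' \<le> (nn (ap V (tensor z (dlt j'))) + nn (tensor z (dlt j'))) / 2"
      unfolding r_def by (rule re_inner_le)
    also have "\<dots> = nn z" by (simp add: unitary_nn[OF U] nn_tensor nn_dlt)
    finally show ?thesis .
  qed
  have "inner_c z z = (\<Sum>j\<in>UNIV. inner_c (ap V (tensor z (dlt j))) (tensor z (dlt j))) / of_nat CARD('n)"
    using F_inner[of z z] Fz by simp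
  then have "of_nat CARD('n) * inner_c z z = (\<Sum>j\<in>UNIV. inner_c (ap V (tensor z (dlt j))) (tensor z (dlt j)))"
    by simp
  then have "complex_of_real (of_nat CARD('n) * nn z) = (\<Sum>j\<in>UNIV. inner_c (ap V (tensor z (dlt j))) (tensor z (dlt j)))"
    by (simp add: inner_c_self_nn)
  then have "of_nat CARD('n) * nn z = Re (\<Sum>j\<in>UNIV. inner_c (ap V (tensor z (dlt j))) (tensor z (dlt j)))"
    by (metis Re_complex_of_real)
  then have "of_nat CARD('n) * nn z = (\<Sum>j\<in>UNIV. r j)"
    unfolding r_def by (simp add: Re_sum)
  then have "(\<Sum>j\<in>UNIV. nn z - r j) = 0"
    by (simp add: sum_subtractf)
  moreover have "\<forall>j\<in>UNIV. nn z - r j \<ge> 0" using le by simp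
  ultimately have "\<forall>j\<in>UNIV. nn z - r j = 0"
    using sum_nonneg_eq_0_iff[of UNIV "\<lambda>j. nn z - r j"] by simp
  then have rj: "r j = nn z" by simp
  show "ap V (tensor z (dlt j)) = tensor z (dlt j)"
  proof (rule eq_of_nn)
    show "nn (ap V (tensor z (dlt j))) = nn (tensor z (dlt j))" by (simp add: unitary_nn[OF U])
    show "Re (inner_c (ap V (tensor z (dlt j))) (tensor z (dlt j))) = nn (ap V (tensor z (dlt j)))"
      using rj unfolding r_def by (simp add: unitary_nn[OF U] nn_tensor nn_dlt)
  qed
qed

end

lemma vnorm_inner: "vnorm e = 1 \<Longrightarrow> inner_c e e = 1"
proof -
  assume "vnorm e = 1"
  then have "(\<Sum>i\<in>UNIV. (cmod (e i))\<^sup>2) = 1" unfolding vnorm_def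
    by (metis real_sqrt_eq_1_iff)
  then show ?thesis unfolding inner_c_self by simp
qed

locale mu1 = mu V for V :: "('n::finite \<times> 'n) mat" +
  fixes e :: "'n vect"
  assumes mult1: "multiplicity_one V" and efix: "e \<in> fixed_vectors V" and eunit: "vnorm e = 1"
begin

lemma ee: "inner_c e e = 1" using vnorm_inner[OF eunit] .

lemma fixed_multiple:
  assumes z: "z \<in> fixed_vectors V"
  shows "\<exists>c. z = (\<lambda>i. c * e i)"
proof -
  obtain v where fv: "fixed_vectors V = {\<xi>. \<exists>c::complex. \<xi> = (\<lambda>i. c * v i)}"
    using mult1 unfolding multiplicity_one_def by blast
  obtain c where c: "z = (\<lambda>i. c * v i)" using z fv by blast
  obtain c' where c': "e = (\<lambda>i. c' * v i)" using efix fv by blast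
  have "c' \<noteq> 0"
  proof
    assume "c' = 0"
    then have "e = (\<lambda>i. 0)" using c' by simp
    then show False using ee inner_zero1[of e] by simp
  qed
  then have "z = (\<lambda>i. (c / c') * e i)" using c c' by (auto simp: fun_eq_iff)
  then show ?thesis by blast
qed

lemma sol_inner_e:
  assumes s: "sol u" and uu: "inner_c u u = 1"
  shows "inner_c u e \<noteq> 0"
proof
  assume ue: "inner_c u e = 0"
  define z where "z = Fv u"
  have "Fv z = z" unfolding z_def by (rule F_idem)
  then have "z \<in> fixed_vectors V" by (rule F_fixed)
  then obtain c where zc: "z = (\<lambda>i. c * e i)" using fixed_multiple by blast
  have "inner_c z u = c * inner_c e u" unfolding zc inner_scale1 ..
  also have "inner_c e u = 0" using ue inner_c_cnj[of e u] by simp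
  finally have z0: "inner_c (Fv u) u = 0" unfolding z_def by simp
  define q where "q = (\<lambda>j. Qv V u (dlt j))"
  have qj: "inner_c (ap V (tensor u (dlt j))) (tensor u (dlt j)) = of_real (nn (q j))" for j
  proof -
    have qq: "Qv V u (q j) = q j" unfolding q_def by (rule Q_idem[OF s uu])
    have qr: "Qv V u (\<lambda>i. dlt j i - q j i) = (\<lambda>i. 0)"
      unfolding Q_diff q_def Q_idem[OF s uu] by simp
    have perp: "inner_c (q j) (\<lambda>i. dlt j i - q j i) = 0" by (rule Q_perp[OF uu qq qr])
    have "inner_c (ap V (tensor u (dlt j))) (tensor u (dlt j)) = inner_c (q j) (dlt j)"
      unfolding q_def Q_inner ..
    also have "\<dots> = inner_c (q j) (q j)"
      using perp unfolding inner_diff2 by simp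
    finally show ?thesis by (simp add: inner_c_self_nn)
  qed
  have "(\<Sum>j\<in>UNIV. complex_of_real (nn (q j))) = 0"
    using z0 unfolding F_inner qj by simp
  then have "(\<Sum>j\<in>UNIV. nn (q j)) = 0"
    by (metis of_real_eq_0_iff of_real_sum)
  then have "\<forall>j\<in>UNIV. nn (q j) = 0"
    by (subst (asm) sum_nonneg_eq_0_iff) (auto intro: nn_ge0)
  then have q0: "\<And>j. Qv V u (dlt j) = (\<lambda>i. 0)" unfolding q_def by (intro nn_zero) simp
  have "Qv V u u k = 0" for k
  proof -
    have "Qv V u u k = (\<Sum>j\<in>UNIV. u j * Qv V u (dlt j) k)" by (rule Q_expand)
    also have "\<dots> = 0" unfolding q0 by simp
    finally show ?thesis .
  qed
  then have "Qv V u u = (\<lambda>k. 0)" by (rule ext)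
  moreover have "Qv V u u = u" using s Q_fix_iff[OF uu] unfolding sol_def by blast
  ultimately have "u = (\<lambda>k. 0)" by (metis (no_types))
  then show False using uu inner_zero1[of u] by simp
qed

end

context mu1
begin

lemma sol_scale: "sol w \<Longrightarrow> sol (\<lambda>i. a * w i)"
  unfolding sol_def by (simp add: tensor_scale1 tensor_scale2 mat_apply_scale)

lemma sol_nonzero_e:
  assumes s: "sol w" and we: "inner_c w e = 0"
  shows "w = (\<lambda>i. 0)"
proof (rule ccontr)
  assume nz: "w \<noteq> (\<lambda>i. 0)"
  have npos: "nn w > 0"
  proof -
    have "nn w \<noteq> 0"
    proof
      assume "nn w = 0"
      then have "w = (\<lambda>i. 0)" by (rule nn_zero)
      then show False using nz by simp
    qed
    then show ?thesis using nn_ge0[of w] by simp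
  qed
  define a :: complex where "a = of_real (1 / sqrt (nn w))"
  define u where "u = (\<lambda>i. a * w i)"
  have su: "sol u" unfolding u_def by (rule sol_scale[OF s])
  have "inner_c u u = a * cnj a * inner_c w w"
    unfolding u_def inner_scale1 inner_scale2 by simp
  also have "\<dots> = of_real ((1 / sqrt (nn w)) * (1 / sqrt (nn w)) * nn w)"
    unfolding a_def inner_c_self_nn by (simp only: complex_cnj_complex_of_real of_real_mult)
  also have "(1 / sqrt (nn w)) * (1 / sqrt (nn w)) * nn w = 1"
    using npos by (simp add: field_simps)
  also have "complex_of_real 1 = 1" by simp
  finally have uu: "inner_c u u = 1" .
  have "inner_c u e = 0" unfolding u_def inner_scale1 we by simp
  then show False using sol_inner_e[OF su uu] by simp
qed

lemma tangent_final:
  assumes s: "sol f" and u: "inner_c f f = 1" and fe: "Im (inner_c f e) = 0" and fe0: "inner_c f e \<noteq> 0"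
    and L: "(\<lambda>p. ap V (tensor f d) p + ap V (tensor d f) p) = (\<lambda>p. tensor f d p + tensor d f p)"
    and df: "Re (inner_c d f) = 0" and de: "Im (inner_c d e) = 0"
  shows "d = (\<lambda>i. 0)"
proof -
  obtain j where fj: "f j \<noteq> 0" using unit_nz[OF u] by blast
  have s': "ap V (tensor f f) = tensor f f" using s unfolding sol_def .
  have Qf: "Qv V f f = f" using s' Q_fix_iff[OF u] by blast
  have Rf: "Rv V f f = f" using s' R_fix_iff[OF u] by blast
  obtain Qd: "Qv V f d = d" and Rd: "Rv V f d = d" using tangent[OF s u L] by blast
  define c where "c = inner_c d e / inner_c f e"
  define w where "w = (\<lambda>i. d i + (- c) * f i)"
  have Qw: "Qv V f w = w" unfolding w_def Q_lin Qd Qf ..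
  have Rw: "Rv V f w = w" unfolding w_def R_lin Rd Rf ..
  have h1: "ap V (tensor w f) = tensor w f" using Rw R_fix_iff[OF u] by blast
  have h2: "ap V (tensor f w) = tensor f w" using Qw Q_fix_iff[OF u] by blast
  have sw: "sol w" unfolding sol_def by (rule K5[OF fj h1 h2])
  have "inner_c w e = inner_c d e - c * inner_c f e"
    unfolding w_def inner_add1 inner_scale1 by simp
  also have "\<dots> = 0" unfolding c_def using fe0 by simp
  finally have w0: "w = (\<lambda>i. 0)" by (rule sol_nonzero_e[OF sw])
  have dc: "d = (\<lambda>i. c * f i)"
  proof
    fix i show "d i = c * f i" using fun_cong[OF w0, of i] unfolding w_def by (simp add: algebra_simps)
  qed
  have cr: "Im c = 0"
  proof -
    have "inner_c d e = of_real (Re (inner_c d e))" using de by (simp add: complex_eq_iff)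
    moreover have "inner_c f e = of_real (Re (inner_c f e))" using fe by (simp add: complex_eq_iff)
    ultimately have "c = of_real (Re (inner_c d e) / Re (inner_c f e))" unfolding c_def
      by (metis of_real_divide)
    then show ?thesis by simp
  qed
  have "inner_c d f = c" unfolding dc inner_scale1 u by simp
  then have "Re c = 0" using df by simp
  then have "c = 0" using cr by (simp add: complex_eq_iff)
  then show ?thesis unfolding dc by simp
qed

end

definition phi :: "('a::finite) vect \<Rightarrow> complex^'a" where "phi f = (\<chi> i. f i)"
definition psi :: "complex^('a::finite) \<Rightarrow> 'a vect" where "psi y = (\<lambda>i. y $ i)"

lemma psi_phi[simp]: "psi (phi f) = f" unfolding psi_def phi_def by (simp add: fun_eq_iff)
lemma phi_psi[simp]: "phi (psi y) = y" unfolding psi_def phi_def by (simp add: vec_eq_iff)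
lemma inj_phi: "inj phi" by (metis injI psi_phi)

lemma norm_phi: "norm (phi f) = sqrt (nn f)"
  unfolding phi_def norm_vec_def L2_set_def nn_eq by simp

lemma vnorm_nn: "vnorm g = sqrt (nn g)" unfolding vnorm_def nn_eq ..

lemma psi_add: "psi (x + y) = (\<lambda>i. psi x i + psi y i)" unfolding psi_def by (simp add: fun_eq_iff)
lemma psi_diff: "psi (x - y) = (\<lambda>i. psi x i - psi y i)" unfolding psi_def by (simp add: fun_eq_iff)
lemma psi_scaleR: "psi (c *\<^sub>R x) = (\<lambda>i. of_real c * psi x i)" unfolding psi_def by (simp add: fun_eq_iff) (simp add: scaleR_conv_of_real)
lemma phi_diff: "phi a - phi b = phi (\<lambda>i. a i - b i)" unfolding phi_def by (simp add: vec_eq_iff)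

lemma cont_nth[continuous_intros]: "continuous_on S (\<lambda>y::complex^'a::finite. y $ i)"
  by (rule bounded_linear.continuous_on[OF bounded_linear_vec_nth continuous_on_id])

lemma tensor_app: "tensor x y q = x (fst q) * y (snd q)"
  unfolding tensor_def by (simp add: case_prod_beta)

lemma cont_sol: "continuous_on UNIV (\<lambda>y::complex^'a::finite. ap V (tensor (psi y) (psi y)) p)"
  unfolding mat_apply_def tensor_app psi_def by (intro continuous_intros)
lemma cont_tens: "continuous_on UNIV (\<lambda>y::complex^'a::finite. tensor (psi y) (psi y) p)"
  unfolding tensor_app psi_def by (intro continuous_intros)
lemma cont_inner: "continuous_on UNIV (\<lambda>y::complex^'a::finite. inner_c (psi y) e)"
  unfolding inner_c_def psi_def by (intro continuous_intros)

lemma closed_S: "closed {y::complex^'a::finite. (\<forall>p. ap V (tensor (psi y) (psi y)) p = tensor (psi y) (psi y) p)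
   \<and> norm y = 1 \<and> Im (inner_c (psi y) e) = 0 \<and> 0 \<le> Re (inner_c (psi y) e)}"
  by (intro closed_Collect_conj closed_Collect_all closed_Collect_eq closed_Collect_le
      cont_sol cont_tens continuous_on_Re continuous_on_Im cont_inner continuous_intros)

lemma quad_ap: "ap V (tensor (\<lambda>i. f i + d i) (\<lambda>i. f i + d i)) p
   = ap V (tensor f f) p + ap V (tensor f d) p + ap V (tensor d f) p + ap V (tensor d d) p"
  by (simp add: tensor_add1 tensor_add2 mat_apply_add)

lemma quad_t: "tensor (\<lambda>i. f i + d i) (\<lambda>i. f i + d i) p
   = tensor f f p + tensor f d p + tensor d f p + tensor d d p"
  by (simp add: tensor_add1 tensor_add2)

context mu1
begin

definition Lfun :: "'n vect \<Rightarrow> complex^'n \<Rightarrow> (complex^('n \<times> 'n)) \<times> (real \<times> real)" where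
  "Lfun f y = ((\<chi> p. ap V (tensor f (psi y)) p + ap V (tensor (psi y) f) p - tensor f (psi y) p - tensor (psi y) f p),
      (Re (inner_c (psi y) f), Im (inner_c (psi y) e)))"

lemma Lfun_linear: "linear (Lfun f)"
proof (rule linearI)
  fix y z :: "complex^'n"
  show "Lfun f (y + z) = Lfun f y + Lfun f z"
    unfolding Lfun_def psi_add tensor_add1 tensor_add2 mat_apply_add inner_add1
    by (simp add: vec_eq_iff algebra_simps)
next
  fix c :: real and y :: "complex^'n"
  show "Lfun f (c *\<^sub>R y) = c *\<^sub>R Lfun f y"
    unfolding Lfun_def psi_scaleR tensor_scale1 tensor_scale2 mat_apply_scale inner_scale1
    by (simp add: vec_eq_iff algebra_simps) (simp add: scaleR_conv_of_real algebra_simps)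
qed

lemma Lfun_inj:
  assumes s: "sol f" and u: "inner_c f f = 1" and fe: "Im (inner_c f e) = 0" and fe0: "inner_c f e \<noteq> 0"
  shows "inj (Lfun f)"
  unfolding linear_injective_0[OF Lfun_linear]
proof (intro allI impI)
  fix y assume "Lfun f y = 0"
  then have c1: "\<And>p. ap V (tensor f (psi y)) p + ap V (tensor (psi y) f) p - tensor f (psi y) p - tensor (psi y) f p = 0"
    and c2: "Re (inner_c (psi y) f) = 0" and c3: "Im (inner_c (psi y) e) = 0"
    unfolding Lfun_def by (auto simp: vec_eq_iff zero_prod_def)
  have L: "(\<lambda>p. ap V (tensor f (psi y)) p + ap V (tensor (psi y) f) p) = (\<lambda>p. tensor f (psi y) p + tensor (psi y) f p)"
  proof
    fix p show "ap V (tensor f (psi y)) p + ap V (tensor (psi y) f) p = tensor f (psi y) p + tensor (psi y) f p"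
      using c1[of p] by (simp add: algebra_simps)
  qed
  have "psi y = (\<lambda>i. 0)" by (rule tangent_final[OF s u fe fe0 L c2 c3])
  then have "\<And>i. y $ i = 0" unfolding psi_def by metis
  then show "y = 0" by (simp add: vec_eq_iff)
qed

end

context mu1
begin

lemma Lfun_diff_bound:
  assumes sf: "sol f" and uf: "inner_c f f = 1" and ef: "Im (inner_c f e) = 0"
    and sg: "sol g" and ug: "inner_c g g = 1" and eg: "Im (inner_c g e) = 0"
  shows "norm (Lfun f (phi (\<lambda>i. g i - f i))) \<le> 5 / 2 * nn (\<lambda>i. g i - f i)"
proof -
  define d where "d = (\<lambda>i. g i - f i)"
  have gd: "g = (\<lambda>i. f i + d i)" unfolding d_def by simp
  have sf': "\<And>p. ap V (tensor f f) p = tensor f f p" using sf unfolding sol_def by simp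
  have sg': "\<And>p. ap V (tensor g g) p = tensor g g p" using sg unfolding sol_def by simp
  have lin: "ap V (tensor f d) p + ap V (tensor d f) p - tensor f d p - tensor d f p
      = tensor d d p - ap V (tensor d d) p" for p
    using sg'[of p] sf'[of p] unfolding gd quad_ap quad_t by (simp add: algebra_simps)
  have fst_eq: "fst (Lfun f (phi d)) = phi (tensor d d) - phi (ap V (tensor d d))"
    unfolding Lfun_def psi_phi phi_diff lin by (simp add: phi_def)
  have nfst: "norm (fst (Lfun f (phi d))) \<le> 2 * nn d"
  proof -
    have "norm (fst (Lfun f (phi d))) \<le> norm (phi (tensor d d)) + norm (phi (ap V (tensor d d)))"
      unfolding fst_eq by (rule norm_triangle_ineq4)
    also have "\<dots> = 2 * sqrt (nn d * nn d)"
      by (simp add: norm_phi unitary_nn[OF U] nn_tensor)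
    also have "\<dots> = 2 * nn d" using nn_ge0[of d] by simp
    finally show ?thesis .
  qed
  have "inner_c g g = inner_c f f + inner_c f d + inner_c d f + inner_c d d"
    unfolding gd inner_add1 inner_add2 by simp
  then have "inner_c f d + inner_c d f + inner_c d d = 0" using uf ug by (simp add: add.assoc)
  then have "Re (inner_c f d) + Re (inner_c d f) + nn d = 0" unfolding nn_def
    by (metis plus_complex.sel(1) zero_complex.sel(1))
  moreover have "Re (inner_c f d) = Re (inner_c d f)" using inner_c_cnj[of f d] by simp
  ultimately have re: "Re (inner_c d f) = - nn d / 2" by simp
  have im: "Im (inner_c d e) = 0" unfolding d_def inner_diff1 using ef eg by simp
  have snd_eq: "snd (Lfun f (phi d)) = (- nn d / 2, 0)"
    unfolding Lfun_def psi_phi re im by simp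
  have "norm (Lfun f (phi d)) \<le> norm (fst (Lfun f (phi d))) + norm (snd (Lfun f (phi d)))"
    by (metis norm_Pair_le prod.collapse)
  also have "norm (snd (Lfun f (phi d))) = nn d / 2" unfolding snd_eq using nn_ge0[of d] by simp
  finally have "norm (Lfun f (phi d)) \<le> 2 * nn d + nn d / 2" using nfst by linarith
  then show ?thesis unfolding d_def[symmetric] by simp
qed

lemma pre_props:
  assumes "g \<in> pre_subgroups V e"
  shows "sol g" "inner_c g g = 1" "Im (inner_c g e) = 0" "Re (inner_c g e) > 0" "norm (phi g) = 1"
proof -
  show "sol g" using assms unfolding pre_subgroups_def sol_def by simp
  show "Im (inner_c g e) = 0" "Re (inner_c g e) > 0" using assms unfolding pre_subgroups_def by simp_all
  have v: "vnorm g = 1" using assms unfolding pre_subgroups_def by simp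
  then show "inner_c g g = 1" by (rule vnorm_inner)
  show "norm (phi g) = 1" using v by (simp add: norm_phi vnorm_nn)
qed

theorem finite_pre: "finite (pre_subgroups V e)"
proof (rule ccontr)
  define P where "P = pre_subgroups V e"
  assume "infinite (pre_subgroups V e)"
  then have infP: "infinite P" unfolding P_def .
  define T where "T = phi ` P"
  have infT: "infinite T" unfolding T_def
    using infP finite_imageD[of phi P] inj_on_subset[OF inj_phi subset_UNIV] by blast
  have TC: "T \<subseteq> cball 0 1" unfolding T_def P_def using pre_props(5) by auto
  obtain x where x: "x \<in> cball 0 1" "x islimpt T"
    using Heine_Borel_imp_Bolzano_Weierstrass[OF compact_cball infT TC] by blast
  define S where "S = {y::complex^'n. (\<forall>p. ap V (tensor (psi y) (psi y)) p = tensor (psi y) (psi y) p)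
   \<and> norm y = 1 \<and> Im (inner_c (psi y) e) = 0 \<and> 0 \<le> Re (inner_c (psi y) e)}"
  have TS: "T \<subseteq> S"
  proof
    fix y assume "y \<in> T"
    then obtain g where g: "g \<in> P" "y = phi g" unfolding T_def by blast
    have gp: "g \<in> pre_subgroups V e" using g(1) unfolding P_def .
    show "y \<in> S" unfolding S_def g(2) psi_phi
      using pre_props[OF gp] unfolding sol_def by auto
  qed
  have "x \<in> S" using closed_S[of V e] x(2) TS unfolding S_def[symmetric] closed_limpt
    using islimpt_subset by blast
  define f where "f = psi x"
  have sf: "sol f" using \<open>x \<in> S\<close> unfolding S_def f_def sol_def by auto
  have "norm (phi f) = 1" using \<open>x \<in> S\<close> unfolding S_def f_def by simp
  then have "sqrt (nn f) = 1" unfolding norm_phi .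
  then have "nn f = 1" by simp
  then have uf: "inner_c f f = 1" unfolding inner_c_self_nn by simp
  have ef: "Im (inner_c f e) = 0" using \<open>x \<in> S\<close> unfolding S_def f_def by simp
  have fe0: "inner_c f e \<noteq> 0" by (rule sol_inner_e[OF sf uf])
  obtain B where B: "B > 0" "\<And>y. B * norm y \<le> norm (Lfun f y)"
    using linear_inj_bounded_below_pos[OF Lfun_linear Lfun_inj[OF sf uf ef fe0]] by blast
  obtain y' where y': "y' \<in> T" "y' \<noteq> x" "dist y' x < B / 3"
    using x(2) B(1) unfolding islimpt_approachable by (metis divide_pos_pos zero_less_numeral)
  obtain g where g: "g \<in> P" "y' = phi g" using y'(1) unfolding T_def by blast
  have gp: "g \<in> pre_subgroups V e" using g(1) unfolding P_def .
  define d where "d = (\<lambda>i. g i - f i)"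
  have xf: "x = phi f" unfolding f_def by simp
  have yd: "y' - x = phi d" unfolding g(2) xf phi_diff d_def ..
  have nd: "norm (phi d) = sqrt (nn d)" by (rule norm_phi)
  have pos: "norm (phi d) > 0" using y'(2) yd by (metis right_minus_eq zero_less_norm_iff)
  have bnd: "norm (Lfun f (phi d)) \<le> 5 / 2 * nn d"
    unfolding d_def by (rule Lfun_diff_bound[OF sf uf ef pre_props(1,2,3)[OF gp]])
  have "nn d = (norm (phi d))\<^sup>2" unfolding nd using nn_ge0[of d] by simp
  then have "B * norm (phi d) \<le> 5 / 2 * (norm (phi d))\<^sup>2" using B(2)[of "phi d"] bnd by simp
  then have "B \<le> 5 / 2 * norm (phi d)" using pos by (simp add: power2_eq_square)
  moreover have "norm (phi d) < B / 3" using y'(3) yd by (simp add: dist_norm)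
  ultimately show False using B(1) by simp
qed

end

theorem corollary3p6:
  fixes V :: "('n::finite \<times> 'n) mat" and e :: "'n vect"
  assumes "multiplicative_unitary V"
    and "multiplicity_one V"
    and "e \<in> fixed_vectors V" and "vnorm e = 1"
  shows "finite (pre_subgroups V e)"
proof -
  interpret mu1 V e
    using assms by unfold_locales auto
  show ?thesis by (rule finite_pre)
qed

end
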